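(* If the multiply twisted product Finsler manifold $M_0\times_{f_1}M_1\times\cdots\times_{f_{\mathbf b}}M_{\mathbf b}$ has isotropic mean Berwald curvature, then it is a weakly Berwald manifold.
   Context: Let $(M_i,F_i)$, $0\le i\le\mathbf b$, be Finsler manifolds and $f_i:M_0\times M_i\to(0,\infty)$ smooth. The multiply twisted product Finsler manifold is $M=M_0\times\cdots\times M_{\mathbf b}$ with $F(v_0,\dots,v_{\mathbf b})=\sqrt{F_0^2(v_0)+\sum_{i=1}^{\mathbf b}f_i^2(\pi_0(v_0),\pi_i(v_i))F_i^2(v_i)}$ on $TM_0^0\times\cdots\times TM_{\mathbf b}^0$ ($TM_i^0=TM_i\setminus\{0\}$, $\pi_i:TM_i\to M_i$). For a Finsler manifold $(M,F)$ of dimension $n$ with local coordinates $(x^i,y^i)$ on $TM$: $g_{ij}=\frac12\frac{\partial^2F^2}{\partial y^i\partial y^j}$, $(g^{ij})$ its inverse, $G^i=\frac14g^{il}\left(\frac{\partial^2F^2}{\partial x^k\partial y^l}y^k-\frac{\partial F^2}{\partial x^l}\right)$, $B^i_{jkl}=\frac{\partial^3G^i}{\partial y^j\partial y^k\partial y^l}$, $E_{jk}=\frac12B^i_{jki}$ (summed), $y_i=g_{ij}y^j$, $h_{ij}=g_{ij}-F^{-2}y_iy_j$. $F$ is weakly Berwald if $E_{ij}=0$, and has isotropic mean Berwald curvature if $E_{ij}=\frac12(n+1)c\,F^{-1}h_{ij}$ for some scalar function $c=c(x)$ on $M$. *)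

theory Defs
  imports "HOL-Analysis.Analysis"
begin

text \<open>All coordinates of the product manifold
  M = M_0 x ... x M_b are indexed by a finite type 'n; a map blk assigns to
  every coordinate the factor it belongs to.\<close>

definition dd :: "'a::real_normed_vector \<Rightarrow> ('a \<Rightarrow> real) \<Rightarrow> 'a \<Rightarrow> real" where
  "dd v h p = deriv (\<lambda>t. h (p + t *\<^sub>R v)) 0"

fun idd :: "'a::real_normed_vector list \<Rightarrow> ('a \<Rightarrow> real) \<Rightarrow> 'a \<Rightarrow> real" where
  "idd [] h = h"
| "idd (v # vs) h = dd v (idd vs h)"

definition smooth_on :: "'a::euclidean_space set \<Rightarrow> ('a \<Rightarrow> real) \<Rightarrow> bool" where
  "smooth_on S h \<longleftrightarrow> open S \<and>
     (\<forall>vs. set vs \<subseteq> Basis \<longrightarrow> continuous_on S (idd vs h) \<and>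
        (\<forall>v\<in>Basis. \<forall>p\<in>S. (\<lambda>t. idd vs h (p + t *\<^sub>R v)) differentiable (at 0)))"

definition dy :: "'n::finite \<Rightarrow> (real^'n \<Rightarrow> real^'n \<Rightarrow> real) \<Rightarrow> real^'n \<Rightarrow> real^'n \<Rightarrow> real" where
  "dy k H x y = dd (axis k 1) (H x) y"

definition dx :: "'n::finite \<Rightarrow> (real^'n \<Rightarrow> real^'n \<Rightarrow> real) \<Rightarrow> real^'n \<Rightarrow> real^'n \<Rightarrow> real" where
  "dx k H x y = dd (axis k 1) (\<lambda>x'. H x' y) x"

definition Fsq :: "(real^'n \<Rightarrow> real^'n \<Rightarrow> real) \<Rightarrow> real^'n \<Rightarrow> real^'n \<Rightarrow> real" where
  "Fsq F x y = (F x y)\<^sup>2"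

definition fund_g :: "(real^'n \<Rightarrow> real^'n \<Rightarrow> real) \<Rightarrow> 'n::finite \<Rightarrow> 'n \<Rightarrow> real^'n \<Rightarrow> real^'n \<Rightarrow> real" where
  "fund_g F j k x y = 1/2 * dy j (dy k (Fsq F)) x y"

definition fund_ginv :: "(real^'n \<Rightarrow> real^'n \<Rightarrow> real) \<Rightarrow> real^'n \<Rightarrow> real^'n \<Rightarrow> real^'n^'n" where
  "fund_ginv F x y = matrix_inv (\<chi> j k. fund_g F j k (x::real^'n::finite) y)"

definition spray_coeff :: "(real^'n \<Rightarrow> real^'n \<Rightarrow> real) \<Rightarrow> 'n::finite \<Rightarrow> real^'n \<Rightarrow> real^'n \<Rightarrow> real" where
  "spray_coeff F i x y = 1/4 * (\<Sum>l\<in>UNIV. fund_ginv F x y $ i $ l *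
      ((\<Sum>k\<in>UNIV. dx k (dy l (Fsq F)) x y * y $ k) - dx l (Fsq F) x y))"

definition berwald_curv :: "(real^'n \<Rightarrow> real^'n \<Rightarrow> real) \<Rightarrow> 'n::finite \<Rightarrow> 'n \<Rightarrow> 'n \<Rightarrow> 'n \<Rightarrow> real^'n \<Rightarrow> real^'n \<Rightarrow> real" where
  "berwald_curv F i j k l x y = dy j (dy k (dy l (spray_coeff F i))) x y"

definition mean_berwald :: "(real^'n \<Rightarrow> real^'n \<Rightarrow> real) \<Rightarrow> 'n::finite \<Rightarrow> 'n \<Rightarrow> real^'n \<Rightarrow> real^'n \<Rightarrow> real" where
  "mean_berwald F j k x y = 1/2 * (\<Sum>i\<in>UNIV. berwald_curv F i j k i x y)"

definition ylow :: "(real^'n \<Rightarrow> real^'n \<Rightarrow> real) \<Rightarrow> 'n::finite \<Rightarrow> real^'n \<Rightarrow> real^'n \<Rightarrow> real" where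
  "ylow F i x y = (\<Sum>j\<in>UNIV. fund_g F i j x y * y $ j)"

definition angular :: "(real^'n \<Rightarrow> real^'n \<Rightarrow> real) \<Rightarrow> 'n::finite \<Rightarrow> 'n \<Rightarrow> real^'n \<Rightarrow> real^'n \<Rightarrow> real" where
  "angular F i j x y = fund_g F i j x y - ylow F i x y * ylow F j x y / (F x y)\<^sup>2"

definition weakly_berwald :: "(real^'n::finite \<Rightarrow> real^'n \<Rightarrow> real) \<Rightarrow> ((real^'n) \<times> (real^'n)) set \<Rightarrow> bool" where
  "weakly_berwald F D \<longleftrightarrow> (\<forall>(x,y)\<in>D. \<forall>j k. mean_berwald F j k x y = 0)"

definition isotropic_mean_berwald :: "(real^'n::finite \<Rightarrow> real^'n \<Rightarrow> real) \<Rightarrow> ((real^'n) \<times> (real^'n)) set \<Rightarrow> bool" where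
  "isotropic_mean_berwald F D \<longleftrightarrow> (\<exists>c :: real^'n \<Rightarrow> real. \<forall>(x,y)\<in>D. \<forall>j k.
      mean_berwald F j k x y = 1/2 * (real CARD('n) + 1) * c x / F x y * angular F j k x y)"

definition depends_only_on :: "'n::finite set \<Rightarrow> (real^'n \<Rightarrow> 'b) \<Rightarrow> bool" where
  "depends_only_on I h \<longleftrightarrow> (\<forall>x x'. (\<forall>k\<in>I. x $ k = x' $ k) \<longrightarrow> h x = h x')"

definition slit_tb :: "'n::finite set \<Rightarrow> (real^'n) set \<Rightarrow> ((real^'n) \<times> (real^'n)) set" where
  "slit_tb I U = {(x,y). x \<in> U \<and> (\<exists>k\<in>I. y $ k \<noteq> 0)}"

text \<open>A Finsler manifold, in a coordinate chart: coordinates x^k, k in I, ranging over the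
  open set U (a cylinder over I); F is smooth and positive on TM^0, positively
  homogeneous of degree 1 in y, with positive definite fundamental tensor.\<close>
definition finsler_chart :: "'n::finite set \<Rightarrow> (real^'n) set \<Rightarrow> (real^'n \<Rightarrow> real^'n \<Rightarrow> real) \<Rightarrow> bool" where
  "finsler_chart I U F \<longleftrightarrow>
     open U \<and> depends_only_on I (\<lambda>x. x \<in> U) \<and>
     (\<forall>x x' y y'. (\<forall>k\<in>I. x $ k = x' $ k \<and> y $ k = y' $ k) \<longrightarrow> F x y = F x' y') \<and>
     smooth_on (slit_tb I U) (\<lambda>(x,y). F x y) \<and>
     (\<forall>(x,y)\<in>slit_tb I U. F x y > 0) \<and>
     (\<forall>x\<in>U. \<forall>y. \<forall>s>0. F x (s *\<^sub>R y) = s * F x y) \<and>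
     (\<forall>(x,y)\<in>slit_tb I U. \<forall>w::real^'n. (\<exists>k\<in>I. w $ k \<noteq> 0) \<longrightarrow>
         (\<Sum>j\<in>I. \<Sum>k\<in>I. fund_g F j k x y * w $ j * w $ k) > 0)"

text \<open>A smooth positive function on the product of the factors with coordinate block I
  (here I = block 0 union block i), domain U.\<close>
definition twist_fun :: "'n::finite set \<Rightarrow> (real^'n) set \<Rightarrow> (real^'n \<Rightarrow> real) \<Rightarrow> bool" where
  "twist_fun I U f \<longleftrightarrow> depends_only_on I f \<and> smooth_on U f \<and> (\<forall>x\<in>U. f x > 0)"

definition mtp_finsler :: "nat \<Rightarrow> (nat \<Rightarrow> real^'n \<Rightarrow> real^'n \<Rightarrow> real) \<Rightarrow> (nat \<Rightarrow> real^'n \<Rightarrow> real) \<Rightarrow> real^'n \<Rightarrow> real^'n \<Rightarrow> real" where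
  "mtp_finsler b Fs f x y = sqrt ((Fs 0 x y)\<^sup>2 + (\<Sum>i\<in>{1..b}. (f i x)\<^sup>2 * (Fs i x y)\<^sup>2))"

text \<open>TM_0^0 x ... x TM_b^0 over M = U_0 cap ... cap U_b.\<close>
definition mtp_slit :: "('n::finite \<Rightarrow> nat) \<Rightarrow> nat \<Rightarrow> (nat \<Rightarrow> (real^'n) set) \<Rightarrow> ((real^'n) \<times> (real^'n)) set" where
  "mtp_slit blk b U = {(x,y). (\<forall>i\<le>b. x \<in> U i \<and> (\<exists>k. blk k = i \<and> y $ k \<noteq> 0))}"

end

theory Submission
  imports Defs "HOL-Computational_Algebra.Polynomial"
begin


definition ld :: "('a::real_normed_vector \<Rightarrow> real) \<Rightarrow> 'a \<Rightarrow> 'a \<Rightarrow> bool" where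
  "ld h v p \<longleftrightarrow> (\<lambda>t. h (p + t *\<^sub>R v)) differentiable (at 0)"

lemma rdiff_field: "((f::real\<Rightarrow>real) differentiable at x) \<longleftrightarrow> f field_differentiable at x"
  by (metis DERIV_deriv_iff_real_differentiable DERIV_deriv_iff_field_differentiable)

lemma ld_field: "ld h v p \<longleftrightarrow> (\<lambda>t. h (p + t *\<^sub>R v)) field_differentiable (at 0)"
  unfolding ld_def rdiff_field ..

lemma dd_add: "ld h v p \<Longrightarrow> ld k v p \<Longrightarrow> dd v (\<lambda>q. h q + k q) p = dd v h p + dd v k p"
  unfolding dd_def ld_field by simp

lemma dd_diff: "ld h v p \<Longrightarrow> ld k v p \<Longrightarrow> dd v (\<lambda>q. h q - k q) p = dd v h p - dd v k p"
  unfolding dd_def ld_field by simp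

lemma dd_mult: "ld h v p \<Longrightarrow> ld k v p \<Longrightarrow> dd v (\<lambda>q. h q * k q) p = h p * dd v k p + dd v h p * k p"
  unfolding dd_def ld_field by simp

lemma dd_cmult: "ld h v p \<Longrightarrow> dd v (\<lambda>q. c * h q) p = c * dd v h p"
  unfolding dd_def ld_field by simp

lemma dd_const: "dd v (\<lambda>q. c) p = 0"
  unfolding dd_def by simp

lemma dd_pow: "ld h v p \<Longrightarrow> dd v (\<lambda>q. h q ^ m) p = real m * dd v h p * h p ^ (m - 1)"
  unfolding dd_def ld_field by (simp add: deriv_pow)

lemma dd_inverse: "ld h v p \<Longrightarrow> h p \<noteq> 0 \<Longrightarrow> dd v (\<lambda>q. 1 / h q) p = - dd v h p / (h p)^2"
  unfolding dd_def ld_field using deriv_inverse[of "\<lambda>t. h (p + t *\<^sub>R v)" 0]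
  by (simp add: divide_inverse)

lemma ld_add: "ld h v p \<Longrightarrow> ld k v p \<Longrightarrow> ld (\<lambda>q. h q + k q) v p"
  unfolding ld_field by (auto intro: derivative_intros)
lemma ld_diff: "ld h v p \<Longrightarrow> ld k v p \<Longrightarrow> ld (\<lambda>q. h q - k q) v p"
  unfolding ld_field by (auto intro: derivative_intros)
lemma ld_mult: "ld h v p \<Longrightarrow> ld k v p \<Longrightarrow> ld (\<lambda>q. h q * k q) v p"
  unfolding ld_field by (auto intro: derivative_intros)
lemma ld_const: "ld (\<lambda>q. c) v p"
  unfolding ld_field by (auto intro: derivative_intros)
lemma ld_pow: "ld h v p \<Longrightarrow> ld (\<lambda>q. h q ^ m) v p"
  unfolding ld_field by (auto intro: derivative_intros)
lemma ld_inverse: "ld h v p \<Longrightarrow> h p \<noteq> 0 \<Longrightarrow> ld (\<lambda>q. 1 / h q) v p"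
  unfolding ld_field by (auto intro!: derivative_intros)

lemma ld_sum: "finite I \<Longrightarrow> (\<forall>i\<in>I. ld (h i) v p) \<Longrightarrow> ld (\<lambda>q. \<Sum>i\<in>I. h i q) v p"
  by (induction I rule: finite_induct) (auto intro: ld_add ld_const)

lemma dd_sum: "finite I \<Longrightarrow> (\<forall>i\<in>I. ld (h i) v p) \<Longrightarrow> dd v (\<lambda>q. \<Sum>i\<in>I. h i q) p = (\<Sum>i\<in>I. dd v (h i) p)"
proof (induction I rule: finite_induct)
  case empty then show ?case by (simp add: dd_const)
next
  case (insert i I)
  have "dd v (\<lambda>q. \<Sum>i\<in>insert i I. h i q) p = dd v (\<lambda>q. h i q + (\<Sum>i\<in>I. h i q)) p"
    using insert by simp
  also have "\<dots> = dd v (h i) p + dd v (\<lambda>q. \<Sum>i\<in>I. h i q) p"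
    using insert by (intro dd_add ld_sum) auto
  finally show ?case using insert by simp
qed

lemma ev_line: fixes p v :: "'a::real_normed_vector" shows "open S \<Longrightarrow> p \<in> S \<Longrightarrow> eventually (\<lambda>t. p + t *\<^sub>R v \<in> S) (nhds (0::real))"
proof -
  assume a: "open S" "p \<in> S"
  have "open ((\<lambda>t::real. p + t *\<^sub>R v) -` S)"
    by (rule open_vimage[OF a(1)]) (auto intro!: continuous_intros)
  then show ?thesis unfolding eventually_nhds using a(2) by (intro exI[of _ "(\<lambda>t::real. p + t *\<^sub>R v) -` S"]) auto
qed

lemma dd_cong: "open S \<Longrightarrow> p \<in> S \<Longrightarrow> (\<forall>q\<in>S. h q = k q) \<Longrightarrow> dd v h p = dd v k p"
  unfolding dd_def
  by (rule deriv_cong_ev[OF eventually_mono[OF ev_line]]) auto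

lemma ld_cong: "open S \<Longrightarrow> p \<in> S \<Longrightarrow> (\<forall>q\<in>S. h q = k q) \<Longrightarrow> ld h v p \<Longrightarrow> ld k v p"
proof -
  assume a: "open S" "p \<in> S" "\<forall>q\<in>S. h q = k q" "ld h v p"
  have ev: "eventually (\<lambda>t. h (p + t *\<^sub>R v) = k (p + t *\<^sub>R v)) (nhds (0::real))"
    by (rule eventually_mono[OF ev_line[OF a(1,2)]]) (use a(3) in auto)
  from a(4) obtain D where "((\<lambda>t. h (p + t *\<^sub>R v)) has_field_derivative D) (at 0)"
    unfolding ld_field field_differentiable_def by blast
  then have "((\<lambda>t. k (p + t *\<^sub>R v)) has_field_derivative D) (at 0)"
    using DERIV_cong_ev[OF refl ev refl] by simp
  then show ?thesis unfolding ld_field field_differentiable_def by blast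
qed
definition good :: "'a::euclidean_space set \<Rightarrow> ('a \<Rightarrow> real) \<Rightarrow> bool" where
  "good S h \<longleftrightarrow> continuous_on S h \<and> (\<forall>v\<in>Basis. \<forall>p\<in>S. ld h v p)"

lemma smooth_on_iff: "smooth_on S h \<longleftrightarrow> open S \<and> (\<forall>vs. set vs \<subseteq> Basis \<longrightarrow> good S (idd vs h))"
  unfolding smooth_on_def good_def ld_def by auto

lemma idd_append: "idd (vs @ [v]) h = idd vs (dd v h)"
  by (induction vs) auto

lemma smooth_dd: "smooth_on S h \<Longrightarrow> v \<in> Basis \<Longrightarrow> smooth_on S (dd v h)"
  unfolding smooth_on_iff
proof safe
  fix vs :: "'a list" assume a: "\<forall>vs. set vs \<subseteq> Basis \<longrightarrow> good S (idd vs h)" "v \<in> Basis" "set vs \<subseteq> Basis"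
  then have "good S (idd (vs @ [v]) h)" by auto
  then show "good S (idd vs (dd v h))" by (simp add: idd_append)
qed

lemma smooth_good: "smooth_on S h \<Longrightarrow> good S h"
  unfolding smooth_on_iff by (metis empty_set empty_subsetI idd.simps(1))

lemma smooth_open: "smooth_on S h \<Longrightarrow> open S"
  unfolding smooth_on_iff by simp

lemma idd_cong: "open S \<Longrightarrow> \<forall>q\<in>S. h q = k q \<Longrightarrow> q \<in> S \<Longrightarrow> idd vs h q = idd vs k q"
proof (induction vs arbitrary: q)
  case Nil then show ?case by simp
next
  case (Cons v vs)
  have "dd v (idd vs h) q = dd v (idd vs k) q"
    by (rule dd_cong[OF Cons.prems(1) Cons.prems(3)]) (use Cons in auto)
  then show ?case by simp
qed

lemma good_cong: "open S \<Longrightarrow> \<forall>q\<in>S. h q = k q \<Longrightarrow> good S h \<Longrightarrow> good S k"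
  unfolding good_def using continuous_on_cong ld_cong by metis

lemma smooth_cong: "\<forall>q\<in>S. h q = k q \<Longrightarrow> smooth_on S h \<Longrightarrow> smooth_on S k"
  unfolding smooth_on_iff
proof safe
  fix vs :: "'a list" assume a: "\<forall>q\<in>S. h q = k q" "open S" "\<forall>vs. set vs \<subseteq> Basis \<longrightarrow> good S (idd vs h)" "set vs \<subseteq> Basis"
  show "good S (idd vs k)"
    by (rule good_cong[OF a(2) _ a(3)[rule_format, OF a(4)]]) (use idd_cong[OF a(2) a(1)] in auto)
qed

lemma smooth_class:
  assumes "open S" "\<forall>h\<in>C. good S h" "\<forall>h\<in>C. \<forall>v\<in>Basis. \<exists>h'\<in>C. \<forall>q\<in>S. dd v h q = h' q" "h \<in> C"
  shows "smooth_on S h"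
proof -
  have *: "set vs \<subseteq> Basis \<Longrightarrow> (\<forall>h\<in>C. \<exists>h'\<in>C. \<forall>q\<in>S. idd vs h q = h' q)" for vs
  proof (induction vs)
    case Nil then show ?case by auto
  next
    case (Cons v vs)
    show ?case
    proof
      fix h assume "h \<in> C"
      with Cons obtain h' where h': "h' \<in> C" "\<forall>q\<in>S. idd vs h q = h' q" by auto
      have "v \<in> Basis" using Cons.prems by simp
      then have "\<exists>h''\<in>C. \<forall>q\<in>S. dd v h' q = h'' q" using assms(3) h'(1) by blast
      then obtain h'' where h'': "h'' \<in> C" "\<forall>q\<in>S. dd v h' q = h'' q" by blast
      have "\<forall>q\<in>S. idd (v # vs) h q = h'' q"
        using dd_cong[OF assms(1) _ h'(2)] h''(2) by simp
      then show "\<exists>h'\<in>C. \<forall>q\<in>S. idd (v # vs) h q = h' q" using h'' by blast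
    qed
  qed
  show ?thesis unfolding smooth_on_iff
  proof safe
    show "open S" by fact
    fix vs :: "'a list" assume "set vs \<subseteq> Basis"
    then obtain h' where "h' \<in> C" "\<forall>q\<in>S. idd vs h q = h' q" using * assms(4) by blast
    then show "good S (idd vs h)" using good_cong[OF assms(1), of h' "idd vs h"] assms(2) by auto
  qed
qed

lemma good_add: "good S h \<Longrightarrow> good S k \<Longrightarrow> good S (\<lambda>q. h q + k q)"
  unfolding good_def by (auto intro: continuous_on_add ld_add)
lemma good_mult: "good S h \<Longrightarrow> good S k \<Longrightarrow> good S (\<lambda>q. h q * k q)"
  unfolding good_def by (auto intro: continuous_on_mult ld_mult)
lemma good_const: "good S (\<lambda>q. c)"
  unfolding good_def by (auto intro: ld_const)
lemma good_pow: "good S h \<Longrightarrow> good S (\<lambda>q. h q ^ m)"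
  unfolding good_def by (auto intro: continuous_on_power ld_pow)
lemma good_inv: "good S h \<Longrightarrow> \<forall>q\<in>S. h q \<noteq> 0 \<Longrightarrow> good S (\<lambda>q. 1 / h q)"
  unfolding good_def by (auto intro!: continuous_on_divide continuous_on_const ld_inverse)

lemma smooth_const: "open S \<Longrightarrow> smooth_on S (\<lambda>q. c)"
  by (rule smooth_class[where C="range (\<lambda>c q. c)"]) (auto simp: good_const dd_const)

definition spc :: "'a::euclidean_space set \<Rightarrow> (('a \<Rightarrow> real) \<times> ('a \<Rightarrow> real)) list \<Rightarrow> bool" where
  "spc S L \<longleftrightarrow> (\<forall>(a,b)\<in>set L. smooth_on S a \<and> smooth_on S b)"

definition spf :: "(('a \<Rightarrow> real) \<times> ('a \<Rightarrow> real)) list \<Rightarrow> 'a \<Rightarrow> real" where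
  "spf L q = sum_list (map (\<lambda>(a,b). a q * b q) L)"

lemma spf_simps: "spf [] q = 0" "spf ((a,b) # L) q = a q * b q + spf L q"
  unfolding spf_def by auto

lemma spf_fun: "spf [] = (\<lambda>q. 0)" "spf ((a,b) # L) = (\<lambda>q. a q * b q + spf L q)"
  by (auto simp: spf_simps)

lemma spf_good: "spc S L \<Longrightarrow> good S (spf L)"
proof (induction L)
  case Nil then show ?case by (simp add: spf_simps good_const)
next
  case (Cons ab L)
  obtain a b where ab: "ab = (a,b)" by force
  have "good S (\<lambda>q. a q * b q + spf L q)"
    using Cons ab by (intro good_add good_mult) (auto simp: spc_def intro: smooth_good)
  then show ?case using ab by (simp add: spf_simps)
qed

definition spd :: "'a \<Rightarrow> (('a::euclidean_space \<Rightarrow> real) \<times> ('a \<Rightarrow> real)) list \<Rightarrow> (('a \<Rightarrow> real) \<times> ('a \<Rightarrow> real)) list" where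
  "spd v L = concat (map (\<lambda>(a,b). [(dd v a, b), (a, dd v b)]) L)"

lemma spd_simps: "spd v [] = []" "spd v ((a,b) # L) = (dd v a, b) # (a, dd v b) # spd v L"
  unfolding spd_def by auto

lemma spf_dd: "spc S L \<Longrightarrow> q \<in> S \<Longrightarrow> v \<in> Basis \<Longrightarrow> dd v (spf L) q = spf (spd v L) q"
proof (induction L)
  case Nil then show ?case by (simp add: spf_simps spd_simps dd_const del: spf_def)
next
  case (Cons ab L)
  obtain a b where ab: "ab = (a,b)" by force
  have sa: "smooth_on S a" "smooth_on S b" "spc S L" using Cons.prems ab by (auto simp: spc_def)
  have la: "ld a v q" "ld b v q" "ld (spf L) v q"
    using smooth_good[OF sa(1)] smooth_good[OF sa(2)] spf_good[OF sa(3)] Cons.prems unfolding good_def by auto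
  have "dd v (spf (ab # L)) q = dd v (\<lambda>q. a q * b q + spf L q) q"
    using ab by (simp add: spf_fun)
  also have "\<dots> = dd v (\<lambda>q. a q * b q) q + dd v (spf L) q"
    using la by (intro dd_add ld_mult) auto
  also have "\<dots> = spf (spd v (ab # L)) q"
    using la Cons sa ab by (simp add: dd_mult spd_simps spf_simps algebra_simps)
  finally show ?case .
qed

lemma spd_spc: "spc S L \<Longrightarrow> v \<in> Basis \<Longrightarrow> spc S (spd v L)"
  by (induction L) (auto simp: spc_def spd_simps smooth_dd)

lemma spf_smooth: "open S \<Longrightarrow> spc S L \<Longrightarrow> smooth_on S (spf L)"
proof (rule smooth_class[where C="{spf L | L. spc S L}"])
  assume "open S"
  show "\<forall>h\<in>{spf L |L. spc S L}. good S h" by (auto simp: spf_good)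
  show "\<forall>h\<in>{spf L |L. spc S L}. \<forall>v\<in>Basis. \<exists>h'\<in>{spf L |L. spc S L}. \<forall>q\<in>S. dd v h q = h' q"
  proof (intro ballI)
    fix h and v :: 'a assume "h \<in> {spf L |L. spc S L}" "v \<in> Basis"
    then obtain L where L: "h = spf L" "spc S L" by auto
    show "\<exists>h'\<in>{spf L |L. spc S L}. \<forall>q\<in>S. dd v h q = h' q"
    proof (rule bexI[of _ "spf (spd v L)"])
      show "\<forall>q\<in>S. dd v h q = spf (spd v L) q" using L spf_dd \<open>v \<in> Basis\<close> by auto
      have "spc S (spd v L)" using L spd_spc \<open>v \<in> Basis\<close> by auto
      then show "spf (spd v L) \<in> {spf L |L. spc S L}" by blast
    qed
  qed
qed auto

lemma smooth_mult: "smooth_on S a \<Longrightarrow> smooth_on S b \<Longrightarrow> smooth_on S (\<lambda>q. a q * b q)"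
  using spf_smooth[of S "[(a,b)]"] smooth_open by (auto simp: spc_def spf_fun)

lemma smooth_add: "smooth_on S a \<Longrightarrow> smooth_on S b \<Longrightarrow> smooth_on S (\<lambda>q. a q + b q)"
  using spf_smooth[of S "[(a,\<lambda>q. 1),(b,\<lambda>q. 1)]"] smooth_open smooth_const[of S 1]
  by (auto simp: spc_def spf_fun)

lemma smooth_cmult: "smooth_on S a \<Longrightarrow> smooth_on S (\<lambda>q. c * a q)"
  using smooth_mult[OF smooth_const] smooth_open by blast

lemma smooth_diff: "smooth_on S a \<Longrightarrow> smooth_on S b \<Longrightarrow> smooth_on S (\<lambda>q. a q - b q)"
  using smooth_add[OF _ smooth_cmult[of S b "-1"], of a] by simp

lemma smooth_pow: "smooth_on S a \<Longrightarrow> smooth_on S (\<lambda>q. a q ^ m)"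
  by (induction m) (auto intro: smooth_mult smooth_const smooth_open)

lemma smooth_sum: "finite I \<Longrightarrow> open S \<Longrightarrow> \<forall>i\<in>I. smooth_on S (h i) \<Longrightarrow> smooth_on S (\<lambda>q. \<Sum>i\<in>I. h i q)"
  by (induction I rule: finite_induct) (auto intro: smooth_add smooth_const)

lemma smooth_prod: "finite I \<Longrightarrow> open S \<Longrightarrow> \<forall>i\<in>I. smooth_on S (h i) \<Longrightarrow> smooth_on S (\<lambda>q. \<Prod>i\<in>I. h i q)"
  by (induction I rule: finite_induct) (auto intro: smooth_mult smooth_const)

definition ipf :: "('a \<Rightarrow> real) \<Rightarrow> (('a \<Rightarrow> real) \<times> nat) list \<Rightarrow> 'a \<Rightarrow> real" where
  "ipf h L q = sum_list (map (\<lambda>(a,m). a q * (1 / h q) ^ m) L)"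

lemma ipf_fun: "ipf h [] = (\<lambda>q. 0)" "ipf h ((a,m) # L) = (\<lambda>q. a q * (1 / h q) ^ m + ipf h L q)"
  by (auto simp: ipf_def)

definition ipc :: "'a::euclidean_space set \<Rightarrow> (('a \<Rightarrow> real) \<times> nat) list \<Rightarrow> bool" where
  "ipc S L \<longleftrightarrow> (\<forall>(a,m)\<in>set L. smooth_on S a)"

definition ipd :: "'a \<Rightarrow> ('a::euclidean_space \<Rightarrow> real) \<Rightarrow> (('a \<Rightarrow> real) \<times> nat) list \<Rightarrow> (('a \<Rightarrow> real) \<times> nat) list" where
  "ipd v h L = concat (map (\<lambda>(a,m). [(dd v a, m), (\<lambda>q. - real m * a q * dd v h q, Suc m)]) L)"

lemma ipd_simps: "ipd v h [] = []" "ipd v h ((a,m) # L) = (dd v a, m) # (\<lambda>q. - real m * a q * dd v h q, Suc m) # ipd v h L"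
  unfolding ipd_def by auto

lemma ipf_good: "good S h \<Longrightarrow> \<forall>q\<in>S. h q \<noteq> 0 \<Longrightarrow> ipc S L \<Longrightarrow> good S (ipf h L)"
proof (induction L)
  case Nil then show ?case by (simp add: ipf_fun good_const)
next
  case (Cons am L)
  obtain a m where am: "am = (a,m)" by force
  have "good S (\<lambda>q. a q * (1 / h q) ^ m + ipf h L q)"
    using Cons am by (intro good_add good_mult good_pow good_inv) (auto simp: ipc_def intro: smooth_good)
  then show ?case using am by (simp add: ipf_fun)
qed

lemma ip_term_dd:
  assumes "ld a v q" "ld h v q" "h q \<noteq> 0"
  shows "dd v (\<lambda>q. a q * (1 / h q) ^ m) q = dd v a q * (1 / h q) ^ m + (- real m * a q * dd v h q) * (1 / h q) ^ Suc m"
proof -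
  have l1: "ld (\<lambda>q. 1 / h q) v q" using assms by (intro ld_inverse)
  have "dd v (\<lambda>q. a q * (1 / h q) ^ m) q = a q * dd v (\<lambda>q. (1 / h q) ^ m) q + dd v a q * (1 / h q) ^ m"
    using assms l1 by (intro dd_mult ld_pow) auto
  also have "dd v (\<lambda>q. (1 / h q) ^ m) q = real m * (- dd v h q / (h q)^2) * (1 / h q) ^ (m - 1)"
    using dd_pow[OF l1] dd_inverse[OF assms(2,3)] by simp
  finally show ?thesis
    using assms(3) by (cases m) (auto simp: field_simps power2_eq_square)
qed

lemma ipf_dd: "smooth_on S h \<Longrightarrow> \<forall>q\<in>S. h q \<noteq> 0 \<Longrightarrow> ipc S L \<Longrightarrow> q \<in> S \<Longrightarrow> v \<in> Basis \<Longrightarrow>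
   dd v (ipf h L) q = ipf h (ipd v h L) q"
proof (induction L)
  case Nil then show ?case by (simp add: ipf_fun ipd_simps dd_const)
next
  case (Cons am L)
  obtain a m where am: "am = (a,m)" by force
  have sa: "smooth_on S a" "ipc S L" using Cons.prems am by (auto simp: ipc_def)
  have gh: "good S h" using Cons.prems smooth_good by blast
  have la: "ld a v q" "ld h v q" "ld (ipf h L) v q"
    using smooth_good[OF sa(1)] gh ipf_good[OF gh _ sa(2)] Cons.prems unfolding good_def by auto
  have lt: "ld (\<lambda>q. a q * (1 / h q) ^ m) v q"
    using la Cons.prems by (intro ld_mult ld_pow ld_inverse) auto
  have "dd v (ipf h (am # L)) q = dd v (\<lambda>q. a q * (1 / h q) ^ m + ipf h L q) q"
    using am by (simp add: ipf_fun)
  also have "\<dots> = dd v (\<lambda>q. a q * (1 / h q) ^ m) q + dd v (ipf h L) q"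
    using la lt by (intro dd_add) auto
  also have "\<dots> = ipf h (ipd v h (am # L)) q"
    using la Cons sa am ip_term_dd[OF la(1,2)] by (simp add: ipd_simps ipf_fun algebra_simps)
  finally show ?case .
qed

lemma ipd_ipc: "smooth_on S h \<Longrightarrow> ipc S L \<Longrightarrow> v \<in> Basis \<Longrightarrow> ipc S (ipd v h L)"
proof (induction L)
  case Nil then show ?case by (simp add: ipc_def ipd_simps)
next
  case (Cons am L)
  obtain a m where am: "am = (a,m)" by force
  have sa: "smooth_on S a" "ipc S L" using Cons.prems am by (auto simp: ipc_def)
  have "smooth_on S (\<lambda>q. - real m * a q * dd v h q)"
    by (intro smooth_mult smooth_cmult smooth_dd sa Cons.prems)
  moreover have "smooth_on S (dd v a)" using sa Cons.prems smooth_dd by blast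
  moreover have "ipc S (ipd v h L)" using Cons sa by blast
  ultimately show ?case using am by (simp add: ipc_def ipd_simps)
qed

lemma ipf_smooth: "smooth_on S h \<Longrightarrow> \<forall>q\<in>S. h q \<noteq> 0 \<Longrightarrow> ipc S L \<Longrightarrow> smooth_on S (ipf h L)"
proof (rule smooth_class[where C="{ipf h L | L. ipc S L}"])
  assume h: "smooth_on S h" "\<forall>q\<in>S. h q \<noteq> 0"
  then show "open S" using smooth_open by blast
  show "\<forall>g\<in>{ipf h L |L. ipc S L}. good S g" using h smooth_good ipf_good by blast
  show "\<forall>g\<in>{ipf h L |L. ipc S L}. \<forall>v\<in>Basis. \<exists>h'\<in>{ipf h L |L. ipc S L}. \<forall>q\<in>S. dd v g q = h' q"
  proof (intro ballI)
    fix g and v :: 'a assume "g \<in> {ipf h L |L. ipc S L}" "v \<in> Basis"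
    then obtain L where L: "g = ipf h L" "ipc S L" by auto
    show "\<exists>h'\<in>{ipf h L |L. ipc S L}. \<forall>q\<in>S. dd v g q = h' q"
    proof (rule bexI[of _ "ipf h (ipd v h L)"])
      show "\<forall>q\<in>S. dd v g q = ipf h (ipd v h L) q" using L h ipf_dd \<open>v \<in> Basis\<close> by auto
      have "ipc S (ipd v h L)" by (rule ipd_ipc[OF h(1) L(2) \<open>v \<in> Basis\<close>])
      then show "ipf h (ipd v h L) \<in> {ipf h L |L. ipc S L}" by blast
    qed
  qed
qed auto

lemma smooth_inv: "smooth_on S h \<Longrightarrow> \<forall>q\<in>S. h q \<noteq> 0 \<Longrightarrow> smooth_on S (\<lambda>q. 1 / h q)"
  using ipf_smooth[of S h "[(\<lambda>q. 1, 1)]"] smooth_const[of S 1] smooth_open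
  by (auto simp: ipc_def ipf_fun)

lemma smooth_divide: "smooth_on S a \<Longrightarrow> smooth_on S h \<Longrightarrow> \<forall>q\<in>S. h q \<noteq> 0 \<Longrightarrow> smooth_on S (\<lambda>q. a q / h q)"
  using smooth_mult[OF _ smooth_inv, of S a h] by (simp add: divide_inverse)


lemma idd_lin:
  assumes "finite T" "open S" "\<forall>t\<in>T. smooth_on S (h t)" "set vs \<subseteq> Basis"
  shows "p \<in> S \<Longrightarrow> idd vs (\<lambda>q. \<Sum>t\<in>T. c t * h t q) p = (\<Sum>t\<in>T. c t * idd vs (h t) p)"
  using assms(4)
proof (induction vs arbitrary: p)
  case Nil then show ?case by simp
next
  case (Cons v vs)
  have v: "v \<in> Basis" "set vs \<subseteq> Basis" using Cons.prems by auto
  have "idd (v # vs) (\<lambda>q. \<Sum>t\<in>T. c t * h t q) p = dd v (idd vs (\<lambda>q. \<Sum>t\<in>T. c t * h t q)) p" by simp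
  also have "\<dots> = dd v (\<lambda>q. \<Sum>t\<in>T. c t * idd vs (h t) q) p"
    by (rule dd_cong[OF assms(2) Cons.prems(1)]) (use Cons v in auto)
  also have "\<dots> = (\<Sum>t\<in>T. dd v (\<lambda>q. c t * idd vs (h t) q) p)"
  proof (rule dd_sum[OF assms(1)])
    have "\<forall>t\<in>T. ld (idd vs (h t)) v p"
      using assms(3) v Cons.prems(1) unfolding smooth_on_iff good_def by blast
    then show "\<forall>t\<in>T. ld (\<lambda>q. c t * idd vs (h t) q) v p" by (auto intro: ld_mult ld_const)
  qed
  also have "\<dots> = (\<Sum>t\<in>T. c t * idd (v # vs) (h t) p)"
  proof (rule sum.cong[OF refl])
    fix t assume "t \<in> T"
    then have "ld (idd vs (h t)) v p"
      using assms(3) v Cons.prems(1) unfolding smooth_on_iff good_def by blast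
    then show "dd v (\<lambda>q. c t * idd vs (h t) q) p = c t * idd (v # vs) (h t) p"
      by (simp add: dd_cmult)
  qed
  finally show ?case .
qed

lemma smooth_det:
  fixes M :: "'a::euclidean_space \<Rightarrow> real^'n^'n"
  assumes "open S" "\<forall>r s. smooth_on S (\<lambda>q. M q $ r $ s)"
  shows "smooth_on S (\<lambda>q. det (M q))"
  unfolding det_def
  by (intro smooth_sum smooth_cmult smooth_prod finite_permutations finite_UNIV assms ballI allI) (use assms in auto)

lemma inv_right: "invertible (A::real^'n^'n) \<Longrightarrow> A ** matrix_inv A = mat 1"
  unfolding invertible_def matrix_inv_def by (rule someI2_ex) auto

lemma inv_entry:
  fixes A :: "real^'n^'n"
  assumes "det A \<noteq> 0"
  shows "matrix_inv A $ i $ l = det (\<chi> r s. if s = i then (if r = l then 1 else 0) else A$r$s) / det A"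
proof -
  have inv: "invertible A" using assms invertible_det_nz by blast
  have "A *v (matrix_inv A *v axis l 1) = axis l 1"
    by (simp add: matrix_vector_mul_assoc inv_right[OF inv])
  then have "matrix_inv A *v axis l 1 = (\<chi> k. det(\<chi> r s. if s=k then axis l 1 $ r else A$r$s) / det A)"
    using cramer[OF assms] by blast
  moreover have "(matrix_inv A *v axis l 1) $ i = matrix_inv A $ i $ l"
    by (simp add: matrix_vector_mult_def axis_def if_distrib cong: if_cong)
  moreover have ax: "\<And>r. axis l (1::real) $ r = (if r = l then 1 else 0)" by (simp add: axis_def)
  ultimately show ?thesis by (simp only: ax vec_lambda_beta)
qed

lemma smooth_fst:
  fixes k :: "'a::euclidean_space \<Rightarrow> real"
  assumes "smooth_on U k"
  shows "smooth_on (U \<times> (UNIV::'b::euclidean_space set)) (\<lambda>p. k (fst p))"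
proof (rule smooth_class[where C="{\<lambda>p::'a\<times>'b. k (fst p) | k. smooth_on U k}"])
  show "open (U \<times> (UNIV::'b set))" using smooth_open[OF assms] by (simp add: open_Times)
  show "\<forall>h\<in>{\<lambda>p::'a\<times>'b. k (fst p) | k. smooth_on U k}. good (U \<times> UNIV) h"
  proof (intro ballI)
    fix h assume "h \<in> {\<lambda>p::'a\<times>'b. k (fst p) | k. smooth_on U k}"
    then obtain k where k: "smooth_on U k" and hk: "h = (\<lambda>p. k (fst p))" by blast
    have gk: "good U k" using k by (rule smooth_good)
    show "good (U \<times> (UNIV::'b set)) h"
      unfolding hk
      unfolding good_def
    proof (intro conjI ballI)
      show "continuous_on (U \<times> UNIV) (\<lambda>p. k (fst p))"
        using gk unfolding good_def
        by (intro continuous_on_compose2[of U k "U \<times> UNIV" fst]) (auto intro: continuous_intros)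
      fix w :: "'a \<times> 'b" and p assume w: "w \<in> Basis" "p \<in> U \<times> (UNIV::'b set)"
      obtain a b where ab: "p = (a,b)" by force
      show "ld (\<lambda>p. k (fst p)) w p"
      proof (cases "snd w = 0")
        case True
        then have "fst w \<in> Basis" using w by (auto simp: Basis_prod_def)
        then have "ld k (fst w) a" using gk w ab unfolding good_def by auto
        then show ?thesis using True ab unfolding ld_def by simp
      next
        case False
        then have "fst w = 0" using w by (auto simp: Basis_prod_def)
        then show ?thesis unfolding ld_def by simp
      qed
    qed
  qed
  show "\<forall>h\<in>{\<lambda>p::'a\<times>'b. k (fst p) | k. smooth_on U k}. \<forall>v\<in>Basis. \<exists>h'\<in>{\<lambda>p::'a\<times>'b. k (fst p) | k. smooth_on U k}. \<forall>q\<in>U \<times> UNIV. dd v h q = h' q"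
  proof (intro ballI)
    fix h and w :: "'a \<times> 'b" assume "h \<in> {\<lambda>p::'a\<times>'b. k (fst p) | k. smooth_on U k}" and w: "w \<in> Basis"
    then obtain k where k: "smooth_on U k" and hk: "h = (\<lambda>p. k (fst p))" by blast
    show "\<exists>h'\<in>{\<lambda>p::'a\<times>'b. k (fst p) | k. smooth_on U k}. \<forall>q\<in>U \<times> UNIV. dd w h q = h' q"
    proof (cases "snd w = 0")
      case True
      then have fw: "fst w \<in> Basis" using w by (auto simp: Basis_prod_def)
      have "smooth_on U (dd (fst w) k)" using fw k smooth_dd by blast
      then have "(\<lambda>p. dd (fst w) k (fst p)) \<in> {\<lambda>p::'a\<times>'b. k (fst p) | k. smooth_on U k}" by blast
      moreover have "\<forall>q\<in>U \<times> UNIV. dd w (\<lambda>p. k (fst p)) q = (\<lambda>p. dd (fst w) k (fst p)) q"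
        using True by (auto simp: dd_def)
      ultimately show ?thesis unfolding hk by (intro bexI)
    next
      case False
      then have "fst w = 0" using w by (auto simp: Basis_prod_def)
      moreover have "smooth_on U (\<lambda>x. 0)" using smooth_const smooth_open[OF k] by blast
      ultimately have "(\<lambda>p. (\<lambda>x. 0::real) (fst p)) \<in> {\<lambda>p::'a\<times>'b. k (fst p) | k. smooth_on U k}"
        by (intro CollectI exI[of _ "\<lambda>x::'a. 0::real"]) simp
      moreover have "\<forall>q\<in>U \<times> UNIV. dd w (\<lambda>p. k (fst p)) q = (\<lambda>p. (\<lambda>x. 0::real) (fst p)) q"
        using \<open>fst w = 0\<close> by (auto simp: dd_def)
      ultimately show ?thesis unfolding hk by (intro bexI)
    qed
  qed
qed (use assms in auto)


lemma pair_line: "((x::'a::real_vector), (z::'b::real_vector)) + t *\<^sub>R (0, v) = (x, z + t *\<^sub>R v)"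
  by simp
lemma pair_line2: "((x::'a::real_vector), (z::'b::real_vector)) + t *\<^sub>R (v, 0) = (x + t *\<^sub>R v, z)"
  by simp

lemma idd_slice:
  fixes h :: "'a::euclidean_space \<times> 'b::euclidean_space \<Rightarrow> real"
  shows "idd vs (\<lambda>z. h (x,z)) = (\<lambda>z. idd (map (\<lambda>v. (0,v)) vs) h (x,z))"
proof (induction vs)
  case Nil then show ?case by simp
next
  case (Cons v vs)
  show ?case by (rule ext) (simp add: Cons dd_def)
qed

lemma basis_0v: "v \<in> Basis \<Longrightarrow> ((0::'a::euclidean_space), (v::'b::euclidean_space)) \<in> Basis"
  by (auto simp: Basis_prod_def)
lemma basis_v0: "v \<in> Basis \<Longrightarrow> ((v::'a::euclidean_space), (0::'b::euclidean_space)) \<in> Basis"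
  by (auto simp: Basis_prod_def)

lemma smooth_slice:
  fixes h :: "'a::euclidean_space \<times> 'b::euclidean_space \<Rightarrow> real"
  assumes "smooth_on S h"
  shows "smooth_on {z. (x,z) \<in> S} (\<lambda>z. h (x,z))"
  unfolding smooth_on_iff
proof (intro conjI allI impI)
  have "open (Pair x -` S)" by (rule open_vimage[OF smooth_open[OF assms]]) (auto intro!: continuous_intros)
  then show "open {z. (x, z) \<in> S}" by (simp add: vimage_def)
  fix vs :: "'b list" assume vs: "set vs \<subseteq> Basis"
  have vs': "set (map (\<lambda>v. (0::'a,v)) vs) \<subseteq> Basis" using vs basis_0v by auto
  have g: "good S (idd (map (\<lambda>v. (0::'a,v)) vs) h)" using assms vs' unfolding smooth_on_iff by blast
  show "good {z. (x, z) \<in> S} (idd vs (\<lambda>z. h (x, z)))"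
    unfolding idd_slice good_def
  proof (intro conjI ballI)
    show "continuous_on {z. (x, z) \<in> S} (\<lambda>z. idd (map (Pair 0) vs) h (x, z))"
      using g unfolding good_def
      by (intro continuous_on_compose2[of S "idd (map (Pair 0) vs) h" _ "Pair x"]) (auto intro!: continuous_intros)
    fix v z :: 'b assume "v \<in> Basis" "z \<in> {z. (x, z) \<in> S}"
    then have "ld (idd (map (Pair 0) vs) h) (0,v) (x,z)" using g basis_0v unfolding good_def by auto
    then show "ld (\<lambda>z. idd (map (Pair 0) vs) h (x, z)) v z" unfolding ld_def by simp
  qed
qed

lemma smooth_comp:
  fixes S :: "(real^'n) set"
  assumes "open S"
  shows "smooth_on S (\<lambda>z. z $ k)"
proof (rule smooth_class[where C="range (\<lambda>c (z::real^'n). c) \<union> {\<lambda>z. z $ k}"])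
  have d: "dd v (\<lambda>z::real^'n. z $ k) p = v $ k" for v p
    unfolding dd_def by (rule DERIV_imp_deriv) (auto intro!: derivative_eq_intros)
  have l: "ld (\<lambda>z::real^'n. z $ k) v p" for v p
    unfolding ld_def by (auto intro!: derivative_intros)
  show "\<forall>h\<in>range (\<lambda>c (z::real^'n). c) \<union> {\<lambda>z. z $ k}. good S h"
    using l by (auto simp: good_def ld_const intro!: continuous_intros)
  show "\<forall>h\<in>range (\<lambda>c (z::real^'n). c) \<union> {\<lambda>z. z $ k}. \<forall>v\<in>Basis. \<exists>h'\<in>range (\<lambda>c (z::real^'n). c) \<union> {\<lambda>z. z $ k}. \<forall>q\<in>S. dd v h q = h' q"
    using d by (auto simp: dd_const)
qed (use assms in auto)

definition jn :: "(real^'n \<Rightarrow> real^'n \<Rightarrow> real) \<Rightarrow> ((real^'n) \<times> (real^'n)) \<Rightarrow> real" where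
  "jn H p = H (fst p) (snd p)"

lemma dy_joint: "dy k H x y = dd (0, axis k 1) (jn H) (x,y)"
  by (simp add: dy_def dd_def jn_def)
lemma dx_joint: "dx k H x y = dd (axis k 1, 0) (jn H) (x,y)"
  by (simp add: dx_def dd_def jn_def)
lemma jn_dy: "jn (dy k H) = dd (0, axis k 1) (jn H)"
  by (rule ext) (simp add: jn_def dy_joint)
lemma jn_dx: "jn (dx k H) = dd (axis k 1, 0) (jn H)"
  by (rule ext) (simp add: jn_def dx_joint)

lemma axis_basis: "axis k (1::real) \<in> Basis"
  by simp

lemma smooth_jdy: "smooth_on S (jn H) \<Longrightarrow> smooth_on S (jn (dy k H))"
  unfolding jn_dy by (intro smooth_dd basis_0v axis_basis)
lemma smooth_jdx: "smooth_on S (jn H) \<Longrightarrow> smooth_on S (jn (dx k H))"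
  unfolding jn_dx by (intro smooth_dd basis_v0 axis_basis)


lemma smooth_subset: "smooth_on S h \<Longrightarrow> T \<subseteq> S \<Longrightarrow> open T \<Longrightarrow> smooth_on T h"
  unfolding smooth_on_iff good_def by (meson continuous_on_subset subsetD)

locale mtp =
  fixes blk :: "'n::finite \<Rightarrow> nat" and b :: nat
    and U :: "nat \<Rightarrow> (real^'n) set"
    and Fs :: "nat \<Rightarrow> real^'n \<Rightarrow> real^'n \<Rightarrow> real"
    and f :: "nat \<Rightarrow> real^'n \<Rightarrow> real"
  assumes b1: "b \<ge> 1"
    and blkb: "\<forall>k. blk k \<le> b"
    and blkex: "\<forall>i\<le>b. \<exists>k. blk k = i"
    and fc: "\<forall>i\<le>b. finsler_chart {k. blk k = i} (U i) (Fs i)"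
    and tw: "\<forall>i\<in>{1..b}. twist_fun ({k. blk k = 0} \<union> {k. blk k = i}) (U 0 \<inter> U i) (f i)"
begin

definition "D = mtp_slit blk b U"
definition "XU = (\<Inter>i\<in>{..b}. U i)"
definition "F0sq x y = (Fs 0 x y)\<^sup>2"
definition "Qf x y = (\<Sum>i\<in>{1..b}. (f i x)\<^sup>2 * (Fs i x y)\<^sup>2)"
definition "Fm = mtp_finsler b Fs f"
definition "Lf x y = F0sq x y + Qf x y"

lemma Fsq_Fm: "Fsq Fm x y = Lf x y"
proof -
  have "0 \<le> (Fs 0 x y)\<^sup>2 + (\<Sum>i\<in>{1..b}. (f i x)\<^sup>2 * (Fs i x y)\<^sup>2)"
    by (intro add_nonneg_nonneg sum_nonneg) auto
  then show ?thesis by (simp add: Fsq_def Fm_def mtp_finsler_def Lf_def F0sq_def Qf_def)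
qed

lemma Fsq_Fm_fun: "Fsq Fm = Lf"
  using Fsq_Fm by (intro ext) auto

lemma fcI: "i \<le> b \<Longrightarrow> finsler_chart {k. blk k = i} (U i) (Fs i)" using fc by auto

lemma D_eq: "D = (\<Inter>i\<in>{..b}. slit_tb {k. blk k = i} (U i))"
  unfolding D_def mtp_slit_def slit_tb_def by auto

lemma D_open: "open D"
  unfolding D_eq
  by (intro open_INT ballI finite_atMost, rule smooth_open) (use fcI in \<open>auto simp: finsler_chart_def\<close>)

lemma XU_open: "open XU"
  unfolding XU_def by (intro open_INT) (use fcI in \<open>auto simp: finsler_chart_def\<close>)

lemma D_XU: "(x,y) \<in> D \<Longrightarrow> x \<in> XU"
  unfolding D_def mtp_slit_def XU_def by auto

lemma D_mem: "(x,y) \<in> D \<longleftrightarrow> x \<in> XU \<and> (\<forall>i\<le>b. \<exists>k. blk k = i \<and> y $ k \<noteq> 0)"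
  unfolding D_def mtp_slit_def XU_def by auto

lemma smooth_Fs: "i \<le> b \<Longrightarrow> smooth_on D (jn (Fs i))"
proof -
  assume i: "i \<le> b"
  have "smooth_on (slit_tb {k. blk k = i} (U i)) (\<lambda>(x,y). Fs i x y)"
    using fcI[OF i] by (simp add: finsler_chart_def)
  moreover have "(\<lambda>(x,y). Fs i x y) = jn (Fs i)" by (auto simp: jn_def)
  moreover have "D \<subseteq> slit_tb {k. blk k = i} (U i)" unfolding D_eq using i by auto
  ultimately show ?thesis using smooth_subset D_open by metis
qed

lemma smooth_f: "i \<in> {1..b} \<Longrightarrow> smooth_on D (\<lambda>p. f i (fst p))"
proof -
  assume i: "i \<in> {1..b}"
  have "smooth_on (U 0 \<inter> U i) (f i)" using tw i by (simp add: twist_fun_def)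
  then have "smooth_on ((U 0 \<inter> U i) \<times> (UNIV :: (real^'n) set)) (\<lambda>p. f i (fst p))" by (rule smooth_fst)
  moreover have "D \<subseteq> (U 0 \<inter> U i) \<times> UNIV" unfolding D_def mtp_slit_def using i by auto
  ultimately show ?thesis using smooth_subset D_open by metis
qed

lemma smooth_F0sq: "smooth_on D (jn F0sq)"
proof -
  have "jn F0sq = (\<lambda>p. jn (Fs 0) p ^ 2)" by (auto simp: jn_def F0sq_def)
  then show ?thesis using smooth_pow[OF smooth_Fs[of 0]] by simp
qed

lemma smooth_Qf: "smooth_on D (jn Qf)"
proof -
  have "jn Qf = (\<lambda>p. \<Sum>i\<in>{1..b}. (f i (fst p))\<^sup>2 * (jn (Fs i) p)\<^sup>2)" by (auto simp: jn_def Qf_def)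
  moreover have "smooth_on D (\<lambda>p. \<Sum>i\<in>{1..b}. (f i (fst p))\<^sup>2 * (jn (Fs i) p)\<^sup>2)"
    by (intro smooth_sum smooth_mult smooth_pow smooth_f smooth_Fs D_open finite_atLeastAtMost ballI) auto
  ultimately show ?thesis by simp
qed

lemma smooth_Lf: "smooth_on D (jn Lf)"
proof -
  have "jn Lf = (\<lambda>p. jn F0sq p + jn Qf p)" by (auto simp: jn_def Lf_def)
  then show ?thesis using smooth_add[OF smooth_F0sq smooth_Qf] by simp
qed

end


definition depo :: "'n::finite set \<Rightarrow> (real^'n \<Rightarrow> real) \<Rightarrow> bool" where
  "depo I H \<longleftrightarrow> (\<forall>w w'. (\<forall>k\<in>I. w$k = w'$k) \<longrightarrow> H w = H w')"

lemma depo_zero: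
  assumes "depo I H" "l \<notin> I"
  shows "dd (axis l 1) H z = 0"
proof -
  have "(\<lambda>t. H (z + t *\<^sub>R axis l 1)) = (\<lambda>t. H z)"
  proof
    fix t
    show "H (z + t *\<^sub>R axis l 1) = H z"
    proof -
      have "\<forall>k\<in>I. (z + t *\<^sub>R axis l 1) $ k = z $ k" using assms(2) by (auto simp: axis_def)
      then show ?thesis using assms(1) unfolding depo_def by blast
    qed
  qed
  then show ?thesis unfolding dd_def by simp
qed

lemma depo_dd:
  fixes I :: "'n::finite set"
  assumes "depo I H"
  shows "depo I (dd (axis l 1) H)"
  unfolding depo_def
proof (intro allI impI)
  fix w w' :: "real^'n" assume a: "\<forall>k\<in>I. w $ k = w' $ k"
  have "(\<lambda>t. H (w + t *\<^sub>R axis l 1)) = (\<lambda>t. H (w' + t *\<^sub>R axis l 1))"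
  proof
    fix t show "H (w + t *\<^sub>R axis l 1) = H (w' + t *\<^sub>R axis l 1)"
      using assms a unfolding depo_def by simp
  qed
  then show "dd (axis l 1) H w = dd (axis l 1) H w'" unfolding dd_def by simp
qed

definition Sc :: "('n::finite \<Rightarrow> nat) \<Rightarrow> real \<Rightarrow> real^'n \<Rightarrow> real^'n" where
  "Sc blk c z = (\<chi> k. if blk k = 0 then z$k else c * z$k)"

definition sg :: "('n::finite \<Rightarrow> nat) \<Rightarrow> real \<Rightarrow> 'n \<Rightarrow> real" where
  "sg blk c k = (if blk k = 0 then 1 else c)"

lemma Sc_nth: "Sc blk c z $ k = sg blk c k * z $ k"
  by (simp add: Sc_def sg_def)

lemma Sc_line: "Sc blk c (z + t *\<^sub>R axis l 1) = Sc blk c z + (t * sg blk c l) *\<^sub>R axis l 1"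
  by (simp add: vec_eq_iff Sc_nth axis_def algebra_simps sg_def)

lemma chain0:
  assumes "blk l = 0"
  shows "dd (axis l 1) H (Sc blk c z) = dd (axis l 1) (\<lambda>w. H (Sc blk c w)) z"
  unfolding dd_def Sc_line using assms by (simp add: sg_def)

lemma chain1:
  assumes "blk l \<noteq> 0" "c \<noteq> 0" "ld (\<lambda>w. H (Sc blk c w)) (axis l 1) z"
  shows "dd (axis l 1) H (Sc blk c z) = (1/c) * dd (axis l 1) (\<lambda>w. H (Sc blk c w)) z"
proof -
  define \<phi> where "\<phi> s = H (Sc blk c (z + s *\<^sub>R axis l 1))" for s
  have phi: "\<phi> s = H (Sc blk c z + (s * c) *\<^sub>R axis l 1)" for s
    unfolding \<phi>_def Sc_line using assms(1) by (simp add: sg_def)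
  have "(\<lambda>t. H (Sc blk c z + t *\<^sub>R axis l 1)) = (\<lambda>t. \<phi> ((1/c) * t))"
    using assms(2) by (simp add: phi)
  moreover have "\<phi> field_differentiable at ((1/c) * 0)"
    using assms(3) unfolding ld_field \<phi>_def by simp
  ultimately have "dd (axis l 1) H (Sc blk c z) = (1/c) * deriv \<phi> 0"
    unfolding dd_def using deriv_compose_linear[of \<phi> "1/c" 0] by simp
  then show ?thesis unfolding dd_def \<phi>_def by simp
qed

lemma chain:
  assumes "c \<noteq> 0" "blk l = 0 \<or> ld (\<lambda>w. H (Sc blk c w)) (axis l 1) z"
  shows "dd (axis l 1) H (Sc blk c z) = (1 / sg blk c l) * dd (axis l 1) (\<lambda>w. H (Sc blk c w)) z"
  using assms chain0 chain1 by (cases "blk l = 0") (auto simp: sg_def)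


context mtp begin

lemma Zx_open: "open {w. (x,w) \<in> D}"
proof -
  have "open (Pair x -` D)" by (rule open_vimage[OF D_open]) (auto intro!: continuous_intros)
  then show ?thesis by (simp add: vimage_def)
qed

lemma Xz_open: "open {x'. (x',z) \<in> D}"
proof -
  have "open ((\<lambda>x'. (x',z)) -` D)" by (rule open_vimage[OF D_open]) (auto intro!: continuous_intros)
  then show ?thesis by (simp add: vimage_def)
qed

lemma ld_y: "smooth_on D (jn H) \<Longrightarrow> (x,z) \<in> D \<Longrightarrow> ld (H x) (axis j 1) z"
proof -
  assume a: "smooth_on D (jn H)" "(x,z) \<in> D"
  have "ld (jn H) (0, axis j 1) (x,z)" using smooth_good[OF a(1)] a(2) basis_0v[OF axis_basis] unfolding good_def by blast
  then show ?thesis unfolding ld_def jn_def by simp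
qed

lemma ld_x: "smooth_on D (jn H) \<Longrightarrow> (x,z) \<in> D \<Longrightarrow> ld (\<lambda>x'. H x' z) (axis k 1) x"
proof -
  assume a: "smooth_on D (jn H)" "(x,z) \<in> D"
  have "ld (jn H) (axis k 1, 0) (x,z)" using smooth_good[OF a(1)] a(2) basis_v0[OF axis_basis] unfolding good_def by blast
  then show ?thesis unfolding ld_def jn_def by simp
qed

lemma dy_cong_D: "(\<forall>w. (x,w) \<in> D \<longrightarrow> H1 x w = H2 x w) \<Longrightarrow> (x,z) \<in> D \<Longrightarrow> dy j H1 x z = dy j H2 x z"
  unfolding dy_def by (rule dd_cong[OF Zx_open]) auto

lemma dx_cong_D: "(\<forall>x'. (x',z) \<in> D \<longrightarrow> H1 x' z = H2 x' z) \<Longrightarrow> (x,z) \<in> D \<Longrightarrow> dx k H1 x z = dx k H2 x z"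
  unfolding dx_def by (rule dd_cong[OF Xz_open]) auto

lemma dy_add_D: "smooth_on D (jn H1) \<Longrightarrow> smooth_on D (jn H2) \<Longrightarrow> (x,z) \<in> D \<Longrightarrow>
   dy j (\<lambda>x y. H1 x y + H2 x y) x z = dy j H1 x z + dy j H2 x z"
  unfolding dy_def using dd_add[OF ld_y ld_y] by blast

lemma dx_add_D: "smooth_on D (jn H1) \<Longrightarrow> smooth_on D (jn H2) \<Longrightarrow> (x,z) \<in> D \<Longrightarrow>
   dx k (\<lambda>x y. H1 x y + H2 x y) x z = dx k H1 x z + dx k H2 x z"
  unfolding dx_def using dd_add[OF ld_x ld_x] by blast

lemma dy_fun: "dy l H x = dd (axis l 1) (H x)"
  by (rule ext) (simp add: dy_def)

lemma F0_dep: "depo {k. blk k = 0} (F0sq x)"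
proof -
  have "finsler_chart {k. blk k = 0} (U 0) (Fs 0)" using fcI by auto
  then show ?thesis unfolding depo_def finsler_chart_def F0sq_def by metis
qed

lemma Fs_dep: "i \<le> b \<Longrightarrow> depo {k. blk k = i} (Fs i x)"
proof -
  assume "i \<le> b"
  then have "finsler_chart {k. blk k = i} (U i) (Fs i)" using fcI by auto
  then show ?thesis unfolding depo_def finsler_chart_def by metis
qed

lemma Q_dep: "depo {k. blk k \<noteq> 0} (Qf x)"
  unfolding depo_def
proof (intro allI impI)
  fix w w' :: "real^'n" assume a: "\<forall>k\<in>{k. blk k \<noteq> 0}. w $ k = w' $ k"
  have "Fs i x w = Fs i x w'" if "i \<in> {1..b}" for i
    using Fs_dep[of i x] that a unfolding depo_def by auto
  then show "Qf x w = Qf x w'" unfolding Qf_def by simp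
qed

lemma Fs_hom: "i \<in> {1..b} \<Longrightarrow> x \<in> U i \<Longrightarrow> c > 0 \<Longrightarrow> Fs i x (Sc blk c w) = c * Fs i x w"
proof -
  assume a: "i \<in> {1..b}" "x \<in> U i" "c > 0"
  have fi: "finsler_chart {k. blk k = i} (U i) (Fs i)" using fcI a by auto
  have "Fs i x (Sc blk c w) = Fs i x (c *\<^sub>R w)"
    using Fs_dep[of i x] a unfolding depo_def by (auto simp: Sc_nth sg_def)
  also have "\<dots> = c * Fs i x w" using fi a unfolding finsler_chart_def by blast
  finally show ?thesis .
qed

lemma F0_Sc: "F0sq x (Sc blk c w) = F0sq x w"
  using F0_dep[of x] unfolding depo_def by (auto simp: Sc_nth sg_def)

lemma Q_Sc: "x \<in> XU \<Longrightarrow> c > 0 \<Longrightarrow> Qf x (Sc blk c w) = c\<^sup>2 * Qf x w"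
proof -
  assume a: "x \<in> XU" "c > 0"
  have "x \<in> U i" if "i \<in> {1..b}" for i using a that unfolding XU_def by auto
  then show ?thesis using a unfolding Qf_def
    by (simp add: Fs_hom sum_distrib_left power_mult_distrib algebra_simps)
qed

lemma Sc_D: "(x,z) \<in> D \<Longrightarrow> c > 0 \<Longrightarrow> (x, Sc blk c z) \<in> D"
  unfolding D_mem by (auto simp: Sc_nth sg_def)

lemma dyF0_zero: "blk l \<noteq> 0 \<Longrightarrow> dy l F0sq x z = 0"
  unfolding dy_def by (rule depo_zero[OF F0_dep]) auto

lemma dyQ_zero: "blk l = 0 \<Longrightarrow> dy l Qf x z = 0"
  unfolding dy_def by (rule depo_zero[OF Q_dep]) auto

lemma ddF0_zero: "\<not> (blk j = 0 \<and> blk k = 0) \<Longrightarrow> dy j (dy k F0sq) x z = 0"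
proof (cases "blk k = 0")
  case True
  assume "\<not> (blk j = 0 \<and> blk k = 0)"
  then have "blk j \<noteq> 0" using True by simp
  moreover have "depo {k. blk k = 0} (dy k F0sq x)" unfolding dy_fun by (rule depo_dd[OF F0_dep])
  ultimately show ?thesis unfolding dy_def[of j] by (intro depo_zero) auto
next
  case False
  then have "dy k F0sq = (\<lambda>x z. 0)" using dyF0_zero by (intro ext) auto
  then show ?thesis by (simp add: dy_def dd_const)
qed

lemma ddQ_zero: "\<not> (blk j \<noteq> 0 \<and> blk k \<noteq> 0) \<Longrightarrow> dy j (dy k Qf) x z = 0"
proof (cases "blk k \<noteq> 0")
  case True
  assume "\<not> (blk j \<noteq> 0 \<and> blk k \<noteq> 0)"
  then have "blk j = 0" using True by simp
  moreover have "depo {k. blk k \<noteq> 0} (dy k Qf x)" unfolding dy_fun by (rule depo_dd[OF Q_dep])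
  ultimately show ?thesis unfolding dy_def[of j] by (intro depo_zero) auto
next
  case False
  then have "dy k Qf = (\<lambda>x z. 0)" using dyQ_zero by (intro ext) auto
  then show ?thesis by (simp add: dy_def dd_const)
qed

lemma dyF0_Sc: "dy l F0sq x (Sc blk c z) = dy l F0sq x z"
proof (cases "blk l = 0")
  case True
  then show ?thesis unfolding dy_def chain0[where blk=blk and l=l, OF True] F0_Sc by simp
qed (simp add: dyF0_zero)

lemma ddF0_Sc: "dy j (dy k F0sq) x (Sc blk c z) = dy j (dy k F0sq) x z"
proof (cases "blk j = 0")
  case True
  have "dy j (dy k F0sq) x (Sc blk c z) = dd (axis j 1) (\<lambda>w. dy k F0sq x (Sc blk c w)) z"
    unfolding dy_def[of j] chain0[where blk=blk and l=j, OF True] ..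
  then show ?thesis by (simp add: dyF0_Sc dy_def[of j])
qed (simp add: ddF0_zero)

lemma smooth_dyQ: "smooth_on D (jn (dy k Qf))" by (intro smooth_jdy smooth_Qf)
lemma smooth_dyF0: "smooth_on D (jn (dy k F0sq))" by (intro smooth_jdy smooth_F0sq)

lemma dyQ_Sc:
  assumes "(x,z) \<in> D" "c > 0"
  shows "dy l Qf x (Sc blk c z) = c * dy l Qf x z"
proof (cases "blk l = 0")
  case False
  have xu: "x \<in> XU" using D_XU assms by blast
  have fe: "(\<lambda>w. Qf x (Sc blk c w)) = (\<lambda>w. c\<^sup>2 * Qf x w)" using Q_Sc[OF xu assms(2)] by auto
  have l: "ld (Qf x) (axis l 1) z" using ld_y[OF smooth_Qf assms(1)] .
  have "dy l Qf x (Sc blk c z) = (1/c) * dd (axis l 1) (\<lambda>w. Qf x (Sc blk c w)) z"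
    unfolding dy_def using assms False l by (intro chain1) (auto simp: fe intro: ld_mult ld_const)
  also have "\<dots> = c * dy l Qf x z" using assms l unfolding fe dy_def
    by (simp add: dd_cmult power2_eq_square)
  finally show ?thesis .
qed (simp add: dyQ_zero)

lemma ddQ_Sc:
  assumes "(x,z) \<in> D" "c > 0"
  shows "dy j (dy k Qf) x (Sc blk c z) = dy j (dy k Qf) x z"
proof (cases "blk j = 0")
  case False
  have eq': "\<forall>w\<in>{w. (x,w) \<in> D}. c * dy k Qf x w = dy k Qf x (Sc blk c w)"
    using dyQ_Sc assms by auto
  have l: "ld (dy k Qf x) (axis j 1) z" using ld_y[OF smooth_dyQ assms(1)] .
  have l2: "ld (\<lambda>w. dy k Qf x (Sc blk c w)) (axis j 1) z"
    by (rule ld_cong[OF Zx_open _ eq']) (use assms l in \<open>auto intro: ld_mult ld_const\<close>)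
  have "dy j (dy k Qf) x (Sc blk c z) = (1/c) * dd (axis j 1) (\<lambda>w. dy k Qf x (Sc blk c w)) z"
    unfolding dy_def[of j] by (rule chain1) (use False assms l2 in auto)
  also have "dd (axis j 1) (\<lambda>w. dy k Qf x (Sc blk c w)) z = dd (axis j 1) (\<lambda>w. c * dy k Qf x w) z"
    by (rule dd_cong[OF Zx_open]) (use assms eq' in auto)
  also have "\<dots> = c * dy j (dy k Qf) x z" using l by (simp add: dd_cmult dy_def[of j])
  finally show ?thesis using assms by simp
qed (simp add: ddQ_zero)

lemma Lf_fun: "Lf = (\<lambda>x y. F0sq x y + Qf x y)"
  by (intro ext) (simp add: Lf_def)

lemma dyL: "(x,z) \<in> D \<Longrightarrow> dy k Lf x z = dy k F0sq x z + dy k Qf x z"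
  unfolding Lf_fun by (rule dy_add_D[OF smooth_F0sq smooth_Qf])

lemma g_dec: "(x,z) \<in> D \<Longrightarrow> fund_g Fm j k x z = 1/2 * (dy j (dy k F0sq) x z + dy j (dy k Qf) x z)"
proof -
  assume a: "(x,z) \<in> D"
  have "dy j (dy k Lf) x z = dy j (\<lambda>x y. dy k F0sq x y + dy k Qf x y) x z"
    by (rule dy_cong_D) (use dyL a in auto)
  also have "\<dots> = dy j (dy k F0sq) x z + dy j (dy k Qf) x z"
    by (rule dy_add_D[OF smooth_dyF0 smooth_dyQ a])
  finally show ?thesis unfolding fund_g_def Fsq_Fm_fun by simp
qed

lemma g_Sc: "(x,z) \<in> D \<Longrightarrow> c > 0 \<Longrightarrow> fund_g Fm j k x (Sc blk c z) = fund_g Fm j k x z"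
proof -
  assume a: "(x,z) \<in> D" "c > 0"
  show ?thesis unfolding g_dec[OF a(1), of j k] g_dec[OF Sc_D[OF a], of j k] ddF0_Sc ddQ_Sc[OF a] ..
qed

lemma g_cross: "blk j = 0 \<Longrightarrow> blk k \<noteq> 0 \<Longrightarrow> (x,z) \<in> D \<Longrightarrow> fund_g Fm j k x z = 0"
proof -
  assume a: "blk j = 0" "blk k \<noteq> 0" "(x,z) \<in> D"
  show ?thesis using ddF0_zero[of j k x z] ddQ_zero[of j k x z] a by (simp add: g_dec[OF a(3)])
qed

end


lemma depo_dd2_zero:
  fixes I :: "'n::finite set"
  assumes "depo I H" "\<not> (j \<in> I \<and> k \<in> I)"
  shows "dd (axis j 1) (dd (axis k 1) H) z = 0"
proof (cases "k \<in> I")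
  case True
  then have "j \<notin> I" using assms by auto
  then show ?thesis by (rule depo_zero[OF depo_dd[OF assms(1)]])
next
  case False
  then have "dd (axis k 1) H = (\<lambda>z. 0)" using depo_zero[OF assms(1)] by auto
  then show ?thesis by (simp add: dd_const)
qed

context mtp begin

definition "cf i x = (if i = 0 then 1 else (f i x)\<^sup>2)"

lemma Fsq_dep: "i \<le> b \<Longrightarrow> depo {k. blk k = i} (Fsq (Fs i) x)"
  using Fs_dep[of i x] unfolding depo_def Fsq_def by metis

lemma smooth_Fsq: "i \<le> b \<Longrightarrow> smooth_on D (jn (Fsq (Fs i)))"
proof -
  assume i: "i \<le> b"
  have "jn (Fsq (Fs i)) = (\<lambda>p. jn (Fs i) p ^ 2)" by (auto simp: jn_def Fsq_def)
  then show ?thesis using smooth_pow[OF smooth_Fs[OF i]] by simp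
qed

lemma dd2_y: "dy j (dy k H) x z = idd [axis j 1, axis k 1] (H x) z"
  by (simp add: dy_def dy_fun)

lemma Qf_fun: "Qf x = (\<lambda>y. \<Sum>i\<in>{1..b}. (f i x)\<^sup>2 * Fsq (Fs i) x y)"
  by (auto simp: Qf_def Fsq_def)

lemma ddQ_dec: "(x,z) \<in> D \<Longrightarrow> dy j (dy k Qf) x z = (\<Sum>i\<in>{1..b}. (f i x)\<^sup>2 * dy j (dy k (Fsq (Fs i))) x z)"
proof -
  assume a: "(x,z) \<in> D"
  have "\<forall>i\<in>{1..b}. smooth_on {w. (x,w) \<in> D} (\<lambda>w. Fsq (Fs i) x w)"
  proof
    fix i assume "i \<in> {1..b}"
    then have "smooth_on D (jn (Fsq (Fs i)))" by (intro smooth_Fsq) auto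
    from smooth_slice[OF this, of x] show "smooth_on {w. (x,w) \<in> D} (\<lambda>w. Fsq (Fs i) x w)" by (simp add: jn_def)
  qed
  then show ?thesis unfolding dd2_y Qf_fun
    by (subst idd_lin[OF finite_atLeastAtMost Zx_open]) (use a in auto)
qed

lemma g_full: "(x,z) \<in> D \<Longrightarrow> fund_g Fm j k x z = (\<Sum>i\<in>{..b}. cf i x * fund_g (Fs i) j k x z)"
proof -
  assume a: "(x,z) \<in> D"
  have "{..b} = insert 0 {1..b}" by auto
  then have "(\<Sum>i\<in>{..b}. cf i x * fund_g (Fs i) j k x z) = fund_g (Fs 0) j k x z + (\<Sum>i\<in>{1..b}. cf i x * fund_g (Fs i) j k x z)"
    by (simp add: cf_def)
  also have "(\<Sum>i\<in>{1..b}. cf i x * fund_g (Fs i) j k x z) = 1/2 * dy j (dy k Qf) x z"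
    using ddQ_dec[OF a] by (simp add: cf_def fund_g_def sum_distrib_left algebra_simps)
  also have "fund_g (Fs 0) j k x z = 1/2 * dy j (dy k F0sq) x z"
    by (simp add: fund_g_def F0sq_def[abs_def] Fsq_def[abs_def])
  finally show ?thesis using g_dec[OF a] by (simp add: algebra_simps)
qed

lemma cf_pos: "(x,z) \<in> D \<Longrightarrow> i \<le> b \<Longrightarrow> cf i x > 0"
proof -
  assume a: "(x,z) \<in> D" "i \<le> b"
  show ?thesis
  proof (cases "i = 0")
    case False
    then have i: "i \<in> {1..b}" using a by auto
    have "x \<in> U 0 \<inter> U i" using D_XU[OF a(1)] a(2) unfolding XU_def by auto
    then have "f i x > 0" using tw i unfolding twist_fun_def by auto
    then show ?thesis by (simp add: cf_def)
  qed (simp add: cf_def)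
qed

lemma fg_zero: "i \<le> b \<Longrightarrow> \<not> (blk j = i \<and> blk k = i) \<Longrightarrow> fund_g (Fs i) j k x z = 0"
  unfolding fund_g_def dd2_y using depo_dd2_zero[OF Fsq_dep] by simp

lemma factor_form_nonneg:
  assumes "(x,z) \<in> D" "i \<le> b"
  shows "(\<Sum>j\<in>UNIV. \<Sum>k\<in>UNIV. fund_g (Fs i) j k x z * w $ j * w $ k) \<ge> 0"
    and "(\<exists>k. blk k = i \<and> w $ k \<noteq> 0) \<Longrightarrow> (\<Sum>j\<in>UNIV. \<Sum>k\<in>UNIV. fund_g (Fs i) j k x z * w $ j * w $ k) > 0"
proof -
  let ?I = "{k. blk k = i}"
  have eq: "(\<Sum>j\<in>UNIV. \<Sum>k\<in>UNIV. fund_g (Fs i) j k x z * w $ j * w $ k) = (\<Sum>j\<in>?I. \<Sum>k\<in>?I. fund_g (Fs i) j k x z * w $ j * w $ k)"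
  proof -
    have "(\<Sum>j\<in>UNIV. \<Sum>k\<in>UNIV. fund_g (Fs i) j k x z * w $ j * w $ k) = (\<Sum>j\<in>UNIV. \<Sum>k\<in>?I. fund_g (Fs i) j k x z * w $ j * w $ k)"
      by (intro sum.cong refl sum.mono_neutral_right) (auto simp: fg_zero assms(2))
    also have "\<dots> = (\<Sum>j\<in>?I. \<Sum>k\<in>?I. fund_g (Fs i) j k x z * w $ j * w $ k)"
      by (intro sum.mono_neutral_right) (auto simp: fg_zero assms(2))
    finally show ?thesis .
  qed
  have sl: "(x,z) \<in> slit_tb ?I (U i)" using assms unfolding D_eq by auto
  have pd: "(\<exists>k\<in>?I. w $ k \<noteq> 0) \<Longrightarrow> (\<Sum>j\<in>?I. \<Sum>k\<in>?I. fund_g (Fs i) j k x z * w $ j * w $ k) > 0"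
    using fcI[OF assms(2)] sl unfolding finsler_chart_def by blast
  show "(\<Sum>j\<in>UNIV. \<Sum>k\<in>UNIV. fund_g (Fs i) j k x z * w $ j * w $ k) \<ge> 0"
  proof (cases "\<exists>k\<in>?I. w $ k \<noteq> 0")
    case True then show ?thesis using pd eq by simp
  next
    case False then show ?thesis unfolding eq by simp
  qed
  show "(\<exists>k. blk k = i \<and> w $ k \<noteq> 0) \<Longrightarrow> (\<Sum>j\<in>UNIV. \<Sum>k\<in>UNIV. fund_g (Fs i) j k x z * w $ j * w $ k) > 0"
    using pd eq by auto
qed

lemma g_posdef:
  assumes "(x,z) \<in> D" "w \<noteq> 0"
  shows "(\<Sum>j\<in>UNIV. \<Sum>k\<in>UNIV. fund_g Fm j k x z * w $ j * w $ k) > 0"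
proof -
  obtain k0 where k0: "w $ k0 \<noteq> 0" using assms(2) by (metis vec_eq_iff zero_index)
  define i0 where "i0 = blk k0"
  have i0: "i0 \<le> b" using blkb i0_def by auto
  have "(\<Sum>j\<in>UNIV. \<Sum>k\<in>UNIV. fund_g Fm j k x z * w $ j * w $ k)
      = (\<Sum>i\<in>{..b}. cf i x * (\<Sum>j\<in>UNIV. \<Sum>k\<in>UNIV. fund_g (Fs i) j k x z * w $ j * w $ k))"
    by (simp add: g_full[OF assms(1)] sum_distrib_left sum_distrib_right sum.swap[of _ "{..b}"] algebra_simps)
  also have "\<dots> > 0"
  proof (rule sum_pos2[OF finite_atMost, of i0])
    show "i0 \<in> {..b}" using i0 by auto
    have "0 < (\<Sum>j\<in>UNIV. \<Sum>k\<in>UNIV. fund_g (Fs i0) j k x z * w $ j * w $ k)"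
      using factor_form_nonneg(2)[OF assms(1) i0, of w] k0 i0_def by auto
    then show "0 < cf i0 x * (\<Sum>j\<in>UNIV. \<Sum>k\<in>UNIV. fund_g (Fs i0) j k x z * w $ j * w $ k)"
      using cf_pos[OF assms(1) i0] by simp
    fix i assume "i \<in> {..b}"
    then have i: "i \<le> b" by simp
    show "0 \<le> cf i x * (\<Sum>j\<in>UNIV. \<Sum>k\<in>UNIV. fund_g (Fs i) j k x z * w $ j * w $ k)"
      using mult_nonneg_nonneg[OF less_imp_le[OF cf_pos[OF assms(1) i]] factor_form_nonneg(1)[OF assms(1) i]] .
  qed
  finally show ?thesis .
qed

definition "GM x z = (\<chi> j k. fund_g Fm j k x z)"

lemma GM_det: "(x,z) \<in> D \<Longrightarrow> det (GM x z) \<noteq> 0"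
proof
  assume a: "(x,z) \<in> D" "det (GM x z) = 0"
  then have "\<not> invertible (GM x z)" using invertible_det_nz by blast
  then obtain w where w: "GM x z *v w = 0" "w \<noteq> 0"
    using matrix_left_invertible_ker invertible_left_inverse by metis
  have "(\<Sum>j\<in>UNIV. \<Sum>k\<in>UNIV. fund_g Fm j k x z * w $ j * w $ k) = (\<Sum>j\<in>UNIV. w $ j * (GM x z *v w) $ j)"
    by (simp add: GM_def matrix_vector_mult_def sum_distrib_left algebra_simps)
  also have "\<dots> = 0" using w by simp
  finally show False using g_posdef[OF a(1) w(2)] by simp
qed

lemma smooth_g: "smooth_on {w. (x,w) \<in> D} (\<lambda>w. fund_g Fm r s x w)"
proof -
  have "smooth_on D (\<lambda>p. 1/2 * jn (dy r (dy s Lf)) p)"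
    by (intro smooth_cmult smooth_jdy smooth_Lf)
  from smooth_slice[OF this, of x] show ?thesis by (simp add: jn_def fund_g_def Fsq_Fm_fun)
qed

lemma ginv_eq: "(x,z) \<in> D \<Longrightarrow> fund_ginv Fm x z $ i $ l =
   det (\<chi> r s. if s = i then (if r = l then 1 else 0) else GM x z $r$s) / det (GM x z)"
  unfolding fund_ginv_def GM_def[symmetric] by (rule inv_entry[OF GM_det])

lemma smooth_ginv: "smooth_on {w. (x,w) \<in> D} (\<lambda>w. fund_ginv Fm x w $ i $ l)"
proof (rule smooth_cong[rule_format, OF _ smooth_divide])
  show "\<And>w. w \<in> {w. (x, w) \<in> D} \<Longrightarrow> det (\<chi> r s. if s = i then (if r = l then 1 else 0) else GM x w $r$s) / det (GM x w) = fund_ginv Fm x w $ i $ l"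
    using ginv_eq by simp
  show "smooth_on {w. (x, w) \<in> D} (\<lambda>w. det (\<chi> r s. if s = i then (if r = l then 1 else 0) else GM x w $r$s))"
  proof (rule smooth_det[OF Zx_open], intro allI)
    fix r s
    have "smooth_on {w. (x, w) \<in> D} (\<lambda>w. if s = i then (if r = l then 1 else 0) else GM x w $ r $ s)"
    proof (cases "s = i")
      case True
      then show ?thesis using smooth_const[OF Zx_open, of x "if r = l then 1 else 0"] by simp
    next
      case False
      then show ?thesis using smooth_g[of x r s] by (simp add: GM_def)
    qed
    then show "smooth_on {w. (x, w) \<in> D} (\<lambda>w. (\<chi> r s. if s = i then (if r = l then 1 else 0) else GM x w $r$s) $ r $ s)"
      by simp
  qed
  show "smooth_on {w. (x, w) \<in> D} (\<lambda>w. det (GM x w))"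
    by (rule smooth_det[OF Zx_open]) (auto simp: GM_def smooth_g)
  show "\<forall>w\<in>{w. (x, w) \<in> D}. det (GM x w) \<noteq> 0" using GM_det by auto
qed

end


lemma idd_add:
  assumes "smooth_on S h" "smooth_on S k" "set vs \<subseteq> Basis" "p \<in> S"
  shows "idd vs (\<lambda>q. h q + k q) p = idd vs h p + idd vs k p"
  using assms(3,4)
proof (induction vs arbitrary: p)
  case Nil then show ?case by simp
next
  case (Cons v vs)
  have S: "open S" using smooth_open[OF assms(1)] .
  have v: "v \<in> Basis" "set vs \<subseteq> Basis" using Cons.prems by auto
  have "idd (v # vs) (\<lambda>q. h q + k q) p = dd v (\<lambda>q. idd vs h q + idd vs k q) p"
    by simp (rule dd_cong[OF S Cons.prems(2)], use Cons v in auto)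
  also have "\<dots> = dd v (idd vs h) p + dd v (idd vs k) p"
    using assms(1,2) v Cons.prems(2) unfolding smooth_on_iff good_def by (intro dd_add) blast+
  finally show ?case by simp
qed

lemma idd_cmult:
  assumes "smooth_on S h" "set vs \<subseteq> Basis" "p \<in> S"
  shows "idd vs (\<lambda>q. c * h q) p = c * idd vs h p"
  using assms(2,3)
proof (induction vs arbitrary: p)
  case Nil then show ?case by simp
next
  case (Cons v vs)
  have S: "open S" using smooth_open[OF assms(1)] .
  have v: "v \<in> Basis" "set vs \<subseteq> Basis" using Cons.prems by auto
  have "idd (v # vs) (\<lambda>q. c * h q) p = dd v (\<lambda>q. c * idd vs h q) p"
    by simp (rule dd_cong[OF S Cons.prems(2)], use Cons v in auto)
  also have "\<dots> = c * dd v (idd vs h) p"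
    using assms(1) v Cons.prems(2) unfolding smooth_on_iff good_def by (intro dd_cmult) blast+
  finally show ?case by simp
qed

lemma idd_diff:
  assumes "smooth_on S h" "smooth_on S k" "set vs \<subseteq> Basis" "p \<in> S"
  shows "idd vs (\<lambda>q. h q - k q) p = idd vs h p - idd vs k p"
proof -
  have "idd vs (\<lambda>q. h q + (-1) * k q) p = idd vs h p + idd vs (\<lambda>q. (-1) * k q) p"
    by (rule idd_add[OF assms(1) smooth_cmult[OF assms(2)] assms(3,4)])
  then show ?thesis using idd_cmult[OF assms(2,3,4), of "-1"] by simp
qed

lemma idd_sum:
  assumes "finite T" "open S" "\<forall>t\<in>T. smooth_on S (h t)" "set vs \<subseteq> Basis" "p \<in> S"
  shows "idd vs (\<lambda>q. \<Sum>t\<in>T. h t q) p = (\<Sum>t\<in>T. idd vs (h t) p)"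
  using idd_lin[OF assms(1-4), of p "\<lambda>t. 1"] assms(5) by simp

context mtp begin

lemma smooth_dxdyF0: "smooth_on D (jn (dx k (dy l F0sq)))" by (intro smooth_jdx smooth_jdy smooth_F0sq)
lemma smooth_dxdyQ: "smooth_on D (jn (dx k (dy l Qf)))" by (intro smooth_jdx smooth_jdy smooth_Qf)
lemma smooth_dxF0: "smooth_on D (jn (dx k F0sq))" by (intro smooth_jdx smooth_F0sq)
lemma smooth_dxQ: "smooth_on D (jn (dx k Qf))" by (intro smooth_jdx smooth_Qf)

lemma W1:
  assumes "(x,z) \<in> D" "c > 0"
  shows "dx k (dy l Lf) x (Sc blk c z) = dx k (dy l F0sq) x z + c * dx k (dy l Qf) x z"
proof -
  have eq: "\<forall>x'\<in>{x'. (x',z) \<in> D}. dy l Lf x' (Sc blk c z) = dy l F0sq x' z + c * dy l Qf x' z"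
    using dyL Sc_D dyF0_Sc dyQ_Sc assms(2) by auto
  have "dx k (dy l Lf) x (Sc blk c z) = dd (axis k 1) (\<lambda>x'. dy l F0sq x' z + c * dy l Qf x' z) x"
    unfolding dx_def by (rule dd_cong[OF Xz_open _ eq]) (use assms in auto)
  also have "\<dots> = dx k (dy l F0sq) x z + c * dx k (dy l Qf) x z"
    using ld_x[OF smooth_dyF0 assms(1)] ld_x[OF smooth_dyQ assms(1)]
    by (simp add: dd_add dd_cmult ld_mult ld_const dx_def)
  finally show ?thesis .
qed

lemma W2:
  assumes "(x,z) \<in> D" "c > 0"
  shows "dx l Lf x (Sc blk c z) = dx l F0sq x z + c\<^sup>2 * dx l Qf x z"
proof -
  have eq: "\<forall>x'\<in>{x'. (x',z) \<in> D}. Lf x' (Sc blk c z) = F0sq x' z + c\<^sup>2 * Qf x' z"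
    using F0_Sc Q_Sc D_XU assms(2) by (auto simp: Lf_def)
  have "dx l Lf x (Sc blk c z) = dd (axis l 1) (\<lambda>x'. F0sq x' z + c\<^sup>2 * Qf x' z) x"
    unfolding dx_def by (rule dd_cong[OF Xz_open _ eq]) (use assms in auto)
  also have "\<dots> = dx l F0sq x z + c\<^sup>2 * dx l Qf x z"
    using ld_x[OF smooth_F0sq assms(1)] ld_x[OF smooth_Qf assms(1)]
    by (simp add: dd_add dd_cmult ld_mult ld_const dx_def)
  finally show ?thesis .
qed

definition "P1 x i l k z = fund_ginv Fm x z $ i $ l * dx k (dy l F0sq) x z * z $ k"
definition "P2 x i l k z = fund_ginv Fm x z $ i $ l * dx k (dy l Qf) x z * z $ k"
definition "P3 x i l z = fund_ginv Fm x z $ i $ l * dx l F0sq x z"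
definition "P4 x i l z = fund_ginv Fm x z $ i $ l * dx l Qf x z"

definition "Lam c x i l z = (\<Sum>k\<in>UNIV. sg blk c k / 4 * P1 x i l k z + c * sg blk c k / 4 * P2 x i l k z)
     - (1/4 * P3 x i l z + c\<^sup>2 / 4 * P4 x i l z)"

definition "Gam c x i z = (\<Sum>l\<in>UNIV. Lam c x i l z)"

lemma GM_Sc: "(x,z) \<in> D \<Longrightarrow> c > 0 \<Longrightarrow> GM x (Sc blk c z) = GM x z"
  by (simp add: GM_def g_Sc)

lemma spray_Sc:
  assumes "(x,z) \<in> D" "c > 0"
  shows "spray_coeff Fm i x (Sc blk c z) = Gam c x i z"
proof -
  have gi: "fund_ginv Fm x (Sc blk c z) = fund_ginv Fm x z"
    using GM_Sc[OF assms] unfolding fund_ginv_def GM_def by simp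
  show ?thesis
    unfolding spray_coeff_def Gam_def Lam_def gi Fsq_Fm_fun W1[OF assms] W2[OF assms] Sc_nth
    by (simp add: P1_def P2_def P3_def P4_def sum_distrib_left sum_distrib_right right_diff_distrib
        sum_subtractf[symmetric] sum.distrib[symmetric] algebra_simps)
qed

end


context mtp begin

abbreviation "Zs x \<equiv> {w. (x,w) \<in> D}"

lemma smooth_sl: "smooth_on D (jn H) \<Longrightarrow> smooth_on (Zs x) (H x)"
  using smooth_slice[of D "jn H" x] by (simp add: jn_def)

lemma smooth_P1: "smooth_on (Zs x) (P1 x i l k)"
  unfolding P1_def[abs_def]
  by (intro smooth_mult smooth_ginv smooth_sl smooth_dxdyF0 smooth_comp Zx_open)
lemma smooth_P2: "smooth_on (Zs x) (P2 x i l k)"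
  unfolding P2_def[abs_def]
  by (intro smooth_mult smooth_ginv smooth_sl smooth_dxdyQ smooth_comp Zx_open)
lemma smooth_P3: "smooth_on (Zs x) (P3 x i l)"
  unfolding P3_def[abs_def]
  by (intro smooth_mult smooth_ginv smooth_sl smooth_dxF0)
lemma smooth_P4: "smooth_on (Zs x) (P4 x i l)"
  unfolding P4_def[abs_def]
  by (intro smooth_mult smooth_ginv smooth_sl smooth_dxQ)

lemma smooth_Lam: "smooth_on (Zs x) (Lam c x i l)"
  unfolding Lam_def[abs_def]
  by (intro smooth_diff smooth_add smooth_sum smooth_cmult smooth_P1 smooth_P2 smooth_P3 smooth_P4 Zx_open finite_class.finite_UNIV ballI)

lemma smooth_Gam: "smooth_on (Zs x) (Gam c x i)"
  unfolding Gam_def[abs_def]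
  by (intro smooth_sum smooth_Lam Zx_open finite_class.finite_UNIV ballI)

lemma E1:
  assumes "(x,w) \<in> D" "c > 0"
  shows "dy i (spray_coeff Fm i) x (Sc blk c w) = (1 / sg blk c i) * dd (axis i 1) (Gam c x i) w"
proof -
  have eq: "\<forall>v\<in>Zs x. Gam c x i v = spray_coeff Fm i x (Sc blk c v)" using spray_Sc assms(2) by auto
  have lg: "ld (Gam c x i) (axis i 1) w"
    using smooth_good[OF smooth_Gam] assms(1) unfolding good_def by auto
  have l: "ld (\<lambda>v. spray_coeff Fm i x (Sc blk c v)) (axis i 1) w"
    by (rule ld_cong[OF Zx_open _ eq lg]) (use assms in auto)
  have "dy i (spray_coeff Fm i) x (Sc blk c w) = (1 / sg blk c i) * dd (axis i 1) (\<lambda>v. spray_coeff Fm i x (Sc blk c v)) w"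
    unfolding dy_def by (rule chain) (use assms l in auto)
  also have "dd (axis i 1) (\<lambda>v. spray_coeff Fm i x (Sc blk c v)) w = dd (axis i 1) (Gam c x i) w"
    by (rule dd_cong[OF Zx_open]) (use assms eq in auto)
  finally show ?thesis .
qed

lemma E2:
  assumes "blk j = 0" "(x,y) \<in> D" "c > 0"
  shows "berwald_curv Fm i j j i x (Sc blk c y) = (1 / sg blk c i) * idd [axis j 1, axis j 1, axis i 1] (Gam c x i) y"
proof -
  let ?G = "spray_coeff Fm i"
  have inner: "\<forall>v\<in>Zs x. dy j (dy i ?G) x (Sc blk c v) = dd (axis j 1) (\<lambda>u. (1 / sg blk c i) * dd (axis i 1) (Gam c x i) u) v"
  proof
    fix v assume v: "v \<in> Zs x"
    have "dy j (dy i ?G) x (Sc blk c v) = dd (axis j 1) (\<lambda>u. dy i ?G x (Sc blk c u)) v"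
      unfolding dy_def[of j] chain0[where blk=blk and l=j, OF assms(1)] ..
    also have "\<dots> = dd (axis j 1) (\<lambda>u. (1 / sg blk c i) * dd (axis i 1) (Gam c x i) u) v"
      by (rule dd_cong[OF Zx_open]) (use v E1 assms(3) in auto)
    finally show "dy j (dy i ?G) x (Sc blk c v) = dd (axis j 1) (\<lambda>u. (1 / sg blk c i) * dd (axis i 1) (Gam c x i) u) v" .
  qed
  have "berwald_curv Fm i j j i x (Sc blk c y) = dd (axis j 1) (\<lambda>v. dy j (dy i ?G) x (Sc blk c v)) y"
    unfolding berwald_curv_def dy_def[of j "dy j (dy i ?G)"] chain0[where blk=blk and l=j, OF assms(1)] ..
  also have "\<dots> = dd (axis j 1) (\<lambda>v. dd (axis j 1) (\<lambda>u. (1 / sg blk c i) * dd (axis i 1) (Gam c x i) u) v) y"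
    by (rule dd_cong[OF Zx_open]) (use assms inner in auto)
  also have "\<dots> = idd [axis j 1, axis j 1] (\<lambda>u. (1 / sg blk c i) * dd (axis i 1) (Gam c x i) u) y" by simp
  also have "\<dots> = (1 / sg blk c i) * idd [axis j 1, axis j 1] (dd (axis i 1) (Gam c x i)) y"
    by (rule idd_cmult[OF smooth_dd[OF smooth_Gam axis_basis]]) (use assms in auto)
  finally show ?thesis by simp
qed

lemma E3:
  assumes "blk j = 0" "(x,y) \<in> D" "c > 0"
  shows "mean_berwald Fm j j x (Sc blk c y) = 1/2 * (\<Sum>i\<in>UNIV. (1 / sg blk c i) * idd [axis j 1, axis j 1, axis i 1] (Gam c x i) y)"
  unfolding mean_berwald_def using E2[OF assms] by simp

lemma E4:
  assumes "(x,y) \<in> D" "set vs \<subseteq> Basis"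
  shows "idd vs (Gam c x i) y = (\<Sum>l\<in>UNIV. (\<Sum>k\<in>UNIV. sg blk c k / 4 * idd vs (P1 x i l k) y + c * sg blk c k / 4 * idd vs (P2 x i l k) y)
     - (1/4 * idd vs (P3 x i l) y + c\<^sup>2 / 4 * idd vs (P4 x i l) y))"
proof -
  have y: "y \<in> Zs x" using assms by simp
  have "idd vs (Gam c x i) y = (\<Sum>l\<in>UNIV. idd vs (Lam c x i l) y)"
    unfolding Gam_def[abs_def] by (rule idd_sum[OF finite_class.finite_UNIV Zx_open _ assms(2) y]) (auto intro: smooth_Lam)
  also have "\<dots> = (\<Sum>l\<in>UNIV. (\<Sum>k\<in>UNIV. sg blk c k / 4 * idd vs (P1 x i l k) y + c * sg blk c k / 4 * idd vs (P2 x i l k) y)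
     - (1/4 * idd vs (P3 x i l) y + c\<^sup>2 / 4 * idd vs (P4 x i l) y))"
  proof (rule sum.cong[OF refl])
    fix l
    have s1: "smooth_on (Zs x) (\<lambda>z. \<Sum>k\<in>UNIV. sg blk c k / 4 * P1 x i l k z + c * sg blk c k / 4 * P2 x i l k z)"
      by (intro smooth_sum smooth_add smooth_cmult smooth_P1 smooth_P2 Zx_open finite_class.finite_UNIV ballI)
    have s2: "smooth_on (Zs x) (\<lambda>z. 1/4 * P3 x i l z + c\<^sup>2 / 4 * P4 x i l z)"
      by (intro smooth_add smooth_cmult smooth_P3 smooth_P4)
    have "idd vs (Lam c x i l) y = idd vs (\<lambda>z. \<Sum>k\<in>UNIV. sg blk c k / 4 * P1 x i l k z + c * sg blk c k / 4 * P2 x i l k z) y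
         - idd vs (\<lambda>z. 1/4 * P3 x i l z + c\<^sup>2 / 4 * P4 x i l z) y"
      unfolding Lam_def[abs_def] by (rule idd_diff[OF s1 s2 assms(2) y])
    also have "idd vs (\<lambda>z. \<Sum>k\<in>UNIV. sg blk c k / 4 * P1 x i l k z + c * sg blk c k / 4 * P2 x i l k z) y
       = (\<Sum>k\<in>UNIV. idd vs (\<lambda>z. sg blk c k / 4 * P1 x i l k z + c * sg blk c k / 4 * P2 x i l k z) y)"
      by (rule idd_sum[OF finite_class.finite_UNIV Zx_open _ assms(2) y])
         (intro ballI smooth_add smooth_cmult smooth_P1 smooth_P2)
    also have "\<dots> = (\<Sum>k\<in>UNIV. sg blk c k / 4 * idd vs (P1 x i l k) y + c * sg blk c k / 4 * idd vs (P2 x i l k) y)"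
    proof (rule sum.cong[OF refl])
      fix k
      show "idd vs (\<lambda>z. sg blk c k / 4 * P1 x i l k z + c * sg blk c k / 4 * P2 x i l k z) y
          = sg blk c k / 4 * idd vs (P1 x i l k) y + c * sg blk c k / 4 * idd vs (P2 x i l k) y"
        unfolding idd_add[OF smooth_cmult[OF smooth_P1] smooth_cmult[OF smooth_P2] assms(2) y]
            idd_cmult[OF smooth_P1 assms(2) y] idd_cmult[OF smooth_P2 assms(2) y] ..
    qed
    also have "idd vs (\<lambda>z. 1/4 * P3 x i l z + c\<^sup>2 / 4 * P4 x i l z) y = 1/4 * idd vs (P3 x i l) y + c\<^sup>2 / 4 * idd vs (P4 x i l) y"
      unfolding idd_add[OF smooth_cmult[OF smooth_P3] smooth_cmult[OF smooth_P4] assms(2) y]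
            idd_cmult[OF smooth_P3 assms(2) y] idd_cmult[OF smooth_P4 assms(2) y] ..
    finally show "idd vs (Lam c x i l) y = (\<Sum>k\<in>UNIV. sg blk c k / 4 * idd vs (P1 x i l k) y + c * sg blk c k / 4 * idd vs (P2 x i l k) y)
     - (1/4 * idd vs (P3 x i l) y + c\<^sup>2 / 4 * idd vs (P4 x i l) y)" .
  qed
  finally show ?thesis .
qed

end


lemma poly_eq_pos: "(\<forall>c::real. c > 0 \<longrightarrow> poly p c = poly q c) \<Longrightarrow> p = q"
proof (rule ccontr)
  assume a: "\<forall>c::real. c > 0 \<longrightarrow> poly p c = poly q c" "p \<noteq> q"
  then have "finite {x. poly (p - q) x = 0}" by (intro poly_roots_finite) auto
  moreover have "{0::real<..} \<subseteq> {x. poly (p - q) x = 0}" using a(1) by auto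
  ultimately show False using infinite_Ioi[of "0::real"] finite_subset by blast
qed

lemma strip_X:
  fixes P :: "real poly"
  assumes "P\<^sup>2 * A = [:0,1:]^2 * R" "poly A 0 \<noteq> 0"
  shows "\<exists>P'. P = [:0,1:] * P' \<and> P'\<^sup>2 * A = R"
proof -
  have "poly (P\<^sup>2 * A) 0 = 0" using assms(1) by simp
  then have "poly P 0 = 0" using assms(2) by simp
  then have "[:0,1:] dvd P" using dvd_iff_poly_eq_0[of 0 P] by simp
  then obtain P' where P': "P = [:0,1:] * P'" by (auto elim: dvdE)
  have e: "[:0,1:]^2 * (P'\<^sup>2 * A) = [:0,1:]^2 * R" using assms(1) unfolding P' by (simp only: power_mult_distrib mult.assoc)
  have nz: "([:0,1:]::real poly)^2 \<noteq> 0" by simp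
  have "P'\<^sup>2 * A = R" using e mult_left_cancel[OF nz] by blast
  then show ?thesis using P' by blast
qed

lemma final_alg:
  fixes Pp :: "real poly" and s q \<gamma> K C \<alpha> :: real
  assumes s: "s > 0" and q: "q > 0" and g: "\<gamma> > 0" and K: "K > 0"
    and eq: "\<forall>c>0. poly Pp c = c\<^sup>2 * (K * C / sqrt (s + c\<^sup>2 * q) * (\<gamma> - \<alpha>\<^sup>2 / (sqrt (s + c\<^sup>2 * q))\<^sup>2))"
  shows "C = 0"
proof (rule ccontr)
  assume C: "C \<noteq> 0"
  define A where "A = [:s, 0, q:]"
  define B where "B = [:\<gamma> * s - \<alpha>\<^sup>2, 0, \<gamma> * q:]"
  define k where "k = K\<^sup>2 * C\<^sup>2"
  have k: "k \<noteq> 0" using C K by (simp add: k_def)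
  have pA: "poly A c = s + c\<^sup>2 * q" for c by (simp add: A_def power2_eq_square algebra_simps)
  have pB: "poly B c = \<gamma> * (s + c\<^sup>2 * q) - \<alpha>\<^sup>2" for c by (simp add: B_def power2_eq_square algebra_simps)
  have pt: "poly (Pp\<^sup>2 * A^3) c = poly ([:0,1:]^2 * ([:0,1:]^2 * smult k (B\<^sup>2))) c" if c: "c > 0" for c
  proof -
    define u where "u = s + c\<^sup>2 * q"
    have u: "u > 0" using s q by (simp add: u_def add_pos_nonneg)
    have su: "(sqrt u)\<^sup>2 = u" using u by simp
    have sq: "sqrt u > 0" using u by simp
    have "poly Pp c = c\<^sup>2 * (K * C / sqrt u * (\<gamma> - \<alpha>\<^sup>2 / (sqrt u)\<^sup>2))"
      using eq c by (simp add: u_def)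
    also have "\<dots> = c\<^sup>2 * K * C * (\<gamma> * u - \<alpha>\<^sup>2) / (u * sqrt u)"
      unfolding su using u sq by (simp add: field_simps)
    finally have "poly Pp c = c\<^sup>2 * K * C * (\<gamma> * u - \<alpha>\<^sup>2) / (u * sqrt u)" .
    then have m: "poly Pp c * (u * sqrt u) = c\<^sup>2 * K * C * (\<gamma> * u - \<alpha>\<^sup>2)"
      using u sq by (simp add: field_simps)
    have "(poly Pp c * (u * sqrt u))\<^sup>2 = (poly Pp c)\<^sup>2 * u^3"
      unfolding power_mult_distrib su by (simp add: power2_eq_square power3_eq_cube)
    then have e1: "(poly Pp c)\<^sup>2 * u^3 = (c\<^sup>2 * K * C * (\<gamma> * u - \<alpha>\<^sup>2))\<^sup>2"
      using m by simp
    have pA': "poly A c = u" by (simp add: pA u_def)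
    have pB': "poly B c = \<gamma> * u - \<alpha>\<^sup>2" by (simp add: pB u_def)
    have "poly (Pp\<^sup>2 * A^3) c = (poly Pp c)\<^sup>2 * u^3" by (simp add: pA')
    moreover note e1
    moreover have "poly ([:0,1:]^2 * ([:0,1:]^2 * smult k (B\<^sup>2))) c = c^2 * (c^2 * (k * (\<gamma> * u - \<alpha>\<^sup>2)\<^sup>2))"
      by (simp add: pB')
    moreover have "(c\<^sup>2 * K * C * (\<gamma> * u - \<alpha>\<^sup>2))\<^sup>2 = c^2 * (c^2 * (k * (\<gamma> * u - \<alpha>\<^sup>2)\<^sup>2))"
      by (simp add: k_def power2_eq_square mult_ac)
    ultimately show ?thesis by (simp add: pB')
  qed
  have L: "Pp\<^sup>2 * A^3 = [:0,1:]^2 * ([:0,1:]^2 * smult k (B\<^sup>2))" using pt by (intro poly_eq_pos) auto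
  have A0: "poly (A^3) 0 \<noteq> 0" using s by (simp add: A_def)
  obtain P1 where P1: "P1\<^sup>2 * A^3 = [:0,1:]^2 * smult k (B\<^sup>2)" using strip_X[OF L A0] by blast
  obtain P2 where P2: "P2\<^sup>2 * A^3 = smult k (B\<^sup>2)" using strip_X[OF P1 A0] by blast
  have Bnz: "B \<noteq> 0" using g q by (simp add: B_def)
  have Anz: "A \<noteq> 0" using q by (simp add: A_def)
  have dA: "degree A = 2" using q by (simp add: A_def)
  have dR: "degree (smult k (B\<^sup>2)) \<le> 4"
  proof -
    have "degree B \<le> 2" by (simp add: B_def)
    then have "degree (B\<^sup>2) \<le> 4" using degree_power_le[of B 2] by simp
    then show ?thesis using degree_smult_le[of k "B\<^sup>2"] by simp
  qed
  show False
  proof (cases "P2 = 0")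
    case True
    then have "smult k (B\<^sup>2) = 0" using P2 by simp
    then show False using k Bnz by simp
  next
    case False
    have "degree (P2\<^sup>2 * A^3) = degree (P2\<^sup>2) + degree (A^3)"
      using False Anz by (intro degree_mult_eq) auto
    also have "degree (A^3) = 6" using degree_power_eq[OF Anz, of 3] dA by simp
    finally have "degree (P2\<^sup>2 * A^3) \<ge> 6" by simp
    then show False using P2 dR by simp
  qed
qed


definition "ex blk i = (if blk i = 0 then 2 else (1::nat))"
definition "ek blk k = (if blk k = 0 then 0 else (1::nat))"

lemma termwise:
  fixes c :: real and a b :: "'n::finite \<Rightarrow> real"
  assumes "c \<noteq> 0"
  shows "(c\<^sup>2 / 2 * (1 / sg blk c i)) * ((\<Sum>k\<in>UNIV. sg blk c k / 4 * a k + c * sg blk c k / 4 * b k) - (1/4 * d + c\<^sup>2 / 4 * e))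
   = (\<Sum>k\<in>UNIV. a k / 8 * c ^ (ex blk i + ek blk k) + b k / 8 * c ^ (ex blk i + ek blk k + 1)) - (d / 8 * c ^ (ex blk i) + e / 8 * c ^ (ex blk i + 2))"
proof -
  have h: "c\<^sup>2 / 2 * (1 / sg blk c i) = c ^ ex blk i / 2" using assms
    by (auto simp: sg_def ex_def power2_eq_square)
  have t: "c ^ ex blk i / 2 * (sg blk c k / 4 * a k + c * sg blk c k / 4 * b k) = a k / 8 * c ^ (ex blk i + ek blk k) + b k / 8 * c ^ (ex blk i + ek blk k + 1)" for k
    by (auto simp: sg_def ek_def power_add field_simps)
  show ?thesis unfolding h right_diff_distrib sum_distrib_left t
    by (simp add: power_add field_simps power2_eq_square)
qed

context mtp begin

lemma Fm_sqrt: "Fm x w = sqrt (Lf x w)"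
  by (simp add: Fm_def mtp_finsler_def Lf_def F0sq_def Qf_def)

lemma Lf_Sc: "x \<in> XU \<Longrightarrow> c > 0 \<Longrightarrow> Lf x (Sc blk c y) = F0sq x y + c\<^sup>2 * Qf x y"
  by (simp add: Lf_def F0_Sc Q_Sc)

lemma ylow_Sc:
  assumes "blk j = 0" "(x,y) \<in> D" "c > 0"
  shows "ylow Fm j x (Sc blk c y) = ylow Fm j x y"
proof -
  have "ylow Fm j x (Sc blk c y) = (\<Sum>l\<in>UNIV. fund_g Fm j l x y * (sg blk c l * y $ l))"
    unfolding ylow_def Sc_nth using g_Sc[OF assms(2,3)] by simp
  also have "\<dots> = (\<Sum>l\<in>UNIV. fund_g Fm j l x y * y $ l)"
  proof (rule sum.cong[OF refl])
    fix l show "fund_g Fm j l x y * (sg blk c l * y $ l) = fund_g Fm j l x y * y $ l"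
      using g_cross[OF assms(1) _ assms(2), of l] by (cases "blk l = 0") (auto simp: sg_def)
  qed
  finally show ?thesis unfolding ylow_def .
qed

lemma gjj_pos: "(x,y) \<in> D \<Longrightarrow> fund_g Fm j j x y > 0"
proof -
  assume a: "(x,y) \<in> D"
  have nz: "axis j (1::real) \<noteq> 0" by (simp add: axis_eq_0_iff)
  have e: "(\<Sum>k\<in>UNIV. fund_g Fm a k x y * axis j 1 $ a * axis j (1::real) $ k) = (if a = j then fund_g Fm a j x y else 0)" for a
  proof -
    have "(\<Sum>k\<in>UNIV. fund_g Fm a k x y * axis j 1 $ a * axis j (1::real) $ k) = (\<Sum>k\<in>UNIV. if k = j then (if a = j then fund_g Fm a k x y else 0) else 0)"
      by (intro sum.cong) (auto simp: axis_def)
    then show ?thesis by simp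
  qed
  from g_posdef[OF a nz] show ?thesis unfolding e by simp
qed

lemma s_pos: "(x,y) \<in> D \<Longrightarrow> F0sq x y > 0"
proof -
  assume a: "(x,y) \<in> D"
  have "(x,y) \<in> slit_tb {k. blk k = 0} (U 0)" using a unfolding D_eq by auto
  then have "Fs 0 x y > 0" using fcI[of 0] unfolding finsler_chart_def by auto
  then show ?thesis by (simp add: F0sq_def)
qed

lemma q_pos: "(x,y) \<in> D \<Longrightarrow> Qf x y > 0"
proof -
  assume a: "(x,y) \<in> D"
  have "(f i x)\<^sup>2 * (Fs i x y)\<^sup>2 > 0" if i: "i \<in> {1..b}" for i
  proof -
    have "(x,y) \<in> slit_tb {k. blk k = i} (U i)" using a i unfolding D_eq by auto
    then have "Fs i x y > 0" using fcI[of i] i unfolding finsler_chart_def by auto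
    moreover have "cf i x > 0" using cf_pos[OF a] i by auto
    ultimately show ?thesis using i by (simp add: cf_def)
  qed
  then show ?thesis unfolding Qf_def using b1 by (intro sum_pos) auto
qed

lemma c_zero:
  assumes xy: "(x,y) \<in> D"
    and iso: "\<forall>(x,y)\<in>D. \<forall>j k. mean_berwald Fm j k x y = 1/2 * (real CARD('n) + 1) * C x / Fm x y * angular Fm j k x y"
  shows "C x = 0"
proof -
  obtain j where j: "blk j = 0" using blkex by auto
  let ?vs = "\<lambda>i. [axis j 1, axis j 1, axis i (1::real)]"
  define d1 where "d1 i l k = idd (?vs i) (P1 x i l k) y" for i l k
  define d2 where "d2 i l k = idd (?vs i) (P2 x i l k) y" for i l k
  define d3 where "d3 i l = idd (?vs i) (P3 x i l) y" for i l
  define d4 where "d4 i l = idd (?vs i) (P4 x i l) y" for i l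
  define Pp :: "real poly" where "Pp = (\<Sum>i\<in>UNIV. \<Sum>l\<in>UNIV. (\<Sum>k\<in>UNIV. monom (d1 i l k / 8) (ex blk i + ek blk k) + monom (d2 i l k / 8) (ex blk i + ek blk k + 1))
      - (monom (d3 i l / 8) (ex blk i) + monom (d4 i l / 8) (ex blk i + 2)))"
  define s where "s = F0sq x y"
  define q where "q = Qf x y"
  define \<gamma> where "\<gamma> = fund_g Fm j j x y"
  define \<alpha> where "\<alpha> = ylow Fm j x y"
  define K where "K = 1/2 * (real CARD('n) + 1)"
  have xu: "x \<in> XU" using D_XU xy by blast
  have E: "mean_berwald Fm j j x (Sc blk c y) = 1/2 * (\<Sum>i\<in>UNIV. (1 / sg blk c i) *
     (\<Sum>l\<in>UNIV. (\<Sum>k\<in>UNIV. sg blk c k / 4 * d1 i l k + c * sg blk c k / 4 * d2 i l k) - (1/4 * d3 i l + c\<^sup>2 / 4 * d4 i l)))"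
    if c: "c > 0" for c
  proof -
    have e4: "idd (?vs i) (Gam c x i) y = (\<Sum>l\<in>UNIV. (\<Sum>k\<in>UNIV. sg blk c k / 4 * d1 i l k + c * sg blk c k / 4 * d2 i l k) - (1/4 * d3 i l + c\<^sup>2 / 4 * d4 i l))" for i
      unfolding d1_def d2_def d3_def d4_def by (rule E4[OF xy]) (simp add: axis_basis)
    show ?thesis by (simp only: E3[OF j xy c] e4)
  qed
  have "\<forall>c>0. poly Pp c = c\<^sup>2 * (K * C x / sqrt (s + c\<^sup>2 * q) * (\<gamma> - \<alpha>\<^sup>2 / (sqrt (s + c\<^sup>2 * q))\<^sup>2))"
  proof (intro allI impI)
    fix c :: real assume c: "c > 0"
    have D': "(x, Sc blk c y) \<in> D" using Sc_D[OF xy c] .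
    have "mean_berwald Fm j j x (Sc blk c y) = K * C x / Fm x (Sc blk c y) * angular Fm j j x (Sc blk c y)"
      using iso D' by (auto simp: K_def)
    also have "Fm x (Sc blk c y) = sqrt (s + c\<^sup>2 * q)"
      unfolding Fm_sqrt Lf_Sc[OF xu c] s_def q_def ..
    also have "angular Fm j j x (Sc blk c y) = \<gamma> - \<alpha>\<^sup>2 / (sqrt (s + c\<^sup>2 * q))\<^sup>2"
      unfolding angular_def g_Sc[OF xy c] ylow_Sc[OF j xy c] \<gamma>_def \<alpha>_def
      using \<open>Fm x (Sc blk c y) = sqrt (s + c\<^sup>2 * q)\<close> by (simp add: power2_eq_square)
    finally have M: "mean_berwald Fm j j x (Sc blk c y) = K * C x / sqrt (s + c\<^sup>2 * q) * (\<gamma> - \<alpha>\<^sup>2 / (sqrt (s + c\<^sup>2 * q))\<^sup>2)" .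
    have "poly Pp c = c\<^sup>2 * mean_berwald Fm j j x (Sc blk c y)"
    proof -
      have "c\<^sup>2 * mean_berwald Fm j j x (Sc blk c y) = (\<Sum>i\<in>UNIV. \<Sum>l\<in>UNIV. (c\<^sup>2 / 2 * (1 / sg blk c i)) *
         ((\<Sum>k\<in>UNIV. sg blk c k / 4 * d1 i l k + c * sg blk c k / 4 * d2 i l k) - (1/4 * d3 i l + c\<^sup>2 / 4 * d4 i l)))"
        unfolding E[OF c] by (simp add: sum_distrib_left mult.assoc)
      also have "\<dots> = (\<Sum>i\<in>UNIV. \<Sum>l\<in>UNIV. (\<Sum>k\<in>UNIV. d1 i l k / 8 * c ^ (ex blk i + ek blk k) + d2 i l k / 8 * c ^ (ex blk i + ek blk k + 1))
          - (d3 i l / 8 * c ^ (ex blk i) + d4 i l / 8 * c ^ (ex blk i + 2)))"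
      proof (intro sum.cong refl)
        fix i l show "(c\<^sup>2 / 2 * (1 / sg blk c i)) *
         ((\<Sum>k\<in>UNIV. sg blk c k / 4 * d1 i l k + c * sg blk c k / 4 * d2 i l k) - (1/4 * d3 i l + c\<^sup>2 / 4 * d4 i l))
          = (\<Sum>k\<in>UNIV. d1 i l k / 8 * c ^ (ex blk i + ek blk k) + d2 i l k / 8 * c ^ (ex blk i + ek blk k + 1))
          - (d3 i l / 8 * c ^ (ex blk i) + d4 i l / 8 * c ^ (ex blk i + 2))"
          by (rule termwise) (use c in auto)
      qed
      also have "\<dots> = poly Pp c"
        unfolding Pp_def by (simp add: poly_sum poly_monom)
      finally show ?thesis by simp
    qed
    then show "poly Pp c = c\<^sup>2 * (K * C x / sqrt (s + c\<^sup>2 * q) * (\<gamma> - \<alpha>\<^sup>2 / (sqrt (s + c\<^sup>2 * q))\<^sup>2))"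
      using M by simp
  qed
  moreover have "s > 0" using s_pos[OF xy] by (simp add: s_def)
  moreover have "q > 0" using q_pos[OF xy] by (simp add: q_def)
  moreover have "\<gamma> > 0" using gjj_pos[OF xy] by (simp add: \<gamma>_def)
  moreover have "K > 0" by (simp add: K_def)
  ultimately show ?thesis using final_alg by blast
qed

end

theorem theorem5p5:
  fixes blk :: "'n::finite \<Rightarrow> nat" and b :: nat
    and U :: "nat \<Rightarrow> (real^'n) set"
    and Fs :: "nat \<Rightarrow> real^'n \<Rightarrow> real^'n \<Rightarrow> real"
    and f :: "nat \<Rightarrow> real^'n \<Rightarrow> real"
  assumes "b \<ge> 1"
    and "\<forall>k. blk k \<le> b"
    and "\<forall>i\<le>b. \<exists>k. blk k = i"
    and "\<forall>i\<le>b. finsler_chart {k. blk k = i} (U i) (Fs i)"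
    and "\<forall>i\<in>{1..b}. twist_fun ({k. blk k = 0} \<union> {k. blk k = i}) (U 0 \<inter> U i) (f i)"
    and "isotropic_mean_berwald (mtp_finsler b Fs f) (mtp_slit blk b U)"
  shows "weakly_berwald (mtp_finsler b Fs f) (mtp_slit blk b U)"
proof -
  interpret m: mtp blk b U Fs f using assms(1-5) by unfold_locales
  from assms(6) obtain C where iso: "\<forall>(x,y)\<in>m.D. \<forall>j k. mean_berwald m.Fm j k x y = 1/2 * (real CARD('n) + 1) * C x / m.Fm x y * angular m.Fm j k x y"
    unfolding isotropic_mean_berwald_def m.D_def m.Fm_def by blast
  show ?thesis unfolding weakly_berwald_def
  proof (clarify)
    fix x y j k assume a: "(x,y) \<in> mtp_slit blk b U"
    then have xy: "(x,y) \<in> m.D" by (simp add: m.D_def)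
    have "C x = 0" by (rule m.c_zero[OF xy iso])
    then show "mean_berwald (mtp_finsler b Fs f) j k x y = 0" using iso xy by (auto simp: m.Fm_def)
  qed
qed

end
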